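(* The truncation $\hat \gamma(t) = \sum_{-(d-1)D \le i \le D} a_i t^i$ of the real parametrisation $\gamma(t)= \sum_{-\infty \le i \le D} a_i t^i$ (with $D=d^{n-1}$) of a real branch at infinity $\Gamma$ of $M_a(f)$ has the following properties: (a) $\lim_{t \to \infty} \|\hat \gamma(t)\| = \lim_{t \to \infty} \|\gamma(t)\| = \infty$. (b) $\lim_{t \to \infty} f(\hat \gamma(t))= \lim_{t \to \infty} f(\gamma(t))= t_0$. (c) $\lim_{t\to \infty} \frac{\partial f }{ \partial x_i }(\hat \gamma(t)) = \lim_{t\to \infty} \frac{\partial f }{ \partial x_i }(\gamma(t)) = 0$, for any $i$. (d) $\lim_{t\to \infty}x_j \frac{\partial f }{ \partial x_i }(\hat \gamma(t)) = \lim_{t\to \infty}x_j \frac{\partial f }{ \partial x_i }(\gamma(t)) = 0$, for any $i, j$.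
   Context: Let $f\colon{\mathbb R}^n\to{\mathbb R}$ be a polynomial function of degree $d \ge 2$. For $a\in{\mathbb R}^n$ let $\rho_a(x)=\|x-a\|^2$ and let $M_a(f)$ be the critical set of the mapping $(f,\rho_a)\colon{\mathbb R}^n\to{\mathbb R}^2$ (Milnor set). Let $S_a(f)$ be the set of $t_0\in{\mathbb R}$ such that there is a sequence $x_j\in M_a(f)$ with $\|x_j\|\to\infty$ and $f(x_j)\to t_0$, and let $\mathcal{S}_\infty(f)=\bigcap_{a\in{\mathbb R}^n} S_a(f)$. Let $t_0\in \mathcal{S}_\infty(f)$. Then for $a$ in an open dense subset of ${\mathbb R}^n$, $M_a(f)\setminus{\rm Sing} f$ is a nonsingular curve (or empty), $M_a(f)$ is a real affine algebraic set of dimension 1 whose complexification is a locally complete intersection of degree $D:=d^{n-1}$, and there is a real branch at infinity $\Gamma\subset M_a(f)$ with $\lim_{x\in \Gamma, \| x\| \to \infty} f(x)= t_0$. Let $\gamma(t)= \sum_{-\infty \le i \le D} a_i t^i$ (with $a_i\in{\mathbb R}^n$), $t\in{\mathbb R}$, $|t|>R$ for some $R\gg1$, be a real parametrisation of $\Gamma$ (obtained from Puiseux parametrisations of complex branches at infinity following Milnor's procedure), and let $\hat \gamma(t) = \sum_{-(d-1)D \le i \le D} a_i t^i$ be its truncation at the left to the bound $-(d-1)D$. *)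

theory Defs
  imports "HOL-Analysis.Analysis"
begin

definition poly_fun_of_degree :: "(real^'n \<Rightarrow> real) \<Rightarrow> nat \<Rightarrow> bool" where
  "poly_fun_of_degree f d \<longleftrightarrow>
     (\<exists>c :: ('n \<Rightarrow> nat) \<Rightarrow> real.
        finite {\<alpha>. c \<alpha> \<noteq> 0} \<and>
        (\<forall>x. f x = (\<Sum>\<alpha>\<in>{\<alpha>. c \<alpha> \<noteq> 0}. c \<alpha> * (\<Prod>i\<in>UNIV. (x $ i) ^ \<alpha> i))) \<and>
        (\<forall>\<alpha>. c \<alpha> \<noteq> 0 \<longrightarrow> (\<Sum>i\<in>UNIV. \<alpha> i) \<le> d) \<and>
        (\<exists>\<alpha>. c \<alpha> \<noteq> 0 \<and> (\<Sum>i\<in>UNIV. \<alpha> i) = d))"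

definition partial :: "(real^'n \<Rightarrow> real) \<Rightarrow> 'n \<Rightarrow> real^'n \<Rightarrow> real" where
  "partial f i x = deriv (\<lambda>s. f (x + s *\<^sub>R axis i 1)) 0"

definition rho :: "real^'n \<Rightarrow> real^'n \<Rightarrow> real" where
  "rho a x = (norm (x - a))^2"

definition milnor_set :: "(real^'n \<Rightarrow> real) \<Rightarrow> real^'n \<Rightarrow> (real^'n) set" where
  "milnor_set f a = {x. \<not> surj (frechet_derivative (\<lambda>y. (f y, rho a y)) (at x))}"

definition S_set :: "(real^'n \<Rightarrow> real) \<Rightarrow> real^'n \<Rightarrow> real set" where
  "S_set f a = {t0. \<exists>x :: nat \<Rightarrow> real^'n. (\<forall>j. x j \<in> milnor_set f a) \<and>
       filterlim (\<lambda>j. norm (x j)) at_top sequentially \<and> (\<lambda>j. f (x j)) \<longlonglongrightarrow> t0}"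

definition S_infty :: "(real^'n \<Rightarrow> real) \<Rightarrow> real set" where
  "S_infty f = (\<Inter>a. S_set f a)"

end

theory Submission
  imports Defs
begin


lemma powi_neg_tendsto0:
  assumes "k < 0" shows "((\<lambda>t::real. t powi k) \<longlongrightarrow> 0) at_top"
proof -
  have "((\<lambda>t::real. inverse t ^ nat (-k)) \<longlongrightarrow> 0 ^ nat (-k)) at_top"
    by (intro tendsto_intros tendsto_inverse_0_at_top filterlim_ident)
  moreover have "0 ^ nat (-k) = (0::real)" using assms by simp
  moreover have "(\<lambda>t::real. inverse t ^ nat (-k)) = (\<lambda>t. t powi k)"
    using assms by (auto simp: power_int_def fun_eq_iff)
  ultimately show ?thesis by simp
qed

lemma laurent_asym:
  fixes F :: "real fps" and g u :: "real \<Rightarrow> real" and N :: nat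
  assumes exp: "g has_fps_expansion F"
    and ev: "eventually (\<lambda>t. u t = t ^ N * g (1/t)) at_top"
  shows "\<exists>u' T. (\<forall>t>T. (u has_real_derivative u' t) (at t)) \<and>
     (\<forall>L. (u \<longlongrightarrow> L) at_top \<longrightarrow> ((\<lambda>t. t * u' t) \<longlongrightarrow> 0) at_top) \<and>
     (filterlim u at_top at_top \<longrightarrow> (\<exists>c>0. eventually (\<lambda>t. c * u t \<le> t * u' t) at_top))"
proof -
  from exp have rad: "fps_conv_radius F > 0" and ev0: "eventually (\<lambda>z. eval_fps F z = g z) (nhds 0)"
    by (auto simp: has_fps_expansion_def)
  obtain e where e: "e > 0" "\<And>z. dist z 0 < e \<Longrightarrow> eval_fps F z = g z"
    using ev0 by (auto simp: eventually_nhds_metric)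
  obtain e2 :: real where e2: "0 < ereal e2" "ereal e2 < fps_conv_radius F"
    using ereal_dense2[OF rad] by (auto simp: zero_ereal_def)
  obtain T0 where T0: "\<And>t. t \<ge> T0 \<Longrightarrow> u t = t ^ N * g (1/t)"
    using ev by (auto simp: eventually_at_top_linorder)
  define T where "T = max T0 (max 1 (max (1/e) (1/e2)))"
  have T1: "T \<ge> 1" unfolding T_def by auto
  have key: "u t = t ^ N * eval_fps F (inverse t) \<and> ereal (norm (inverse t)) < fps_conv_radius F"
    if "t > T" for t
  proof -
    have tp: "t > 0" "t > 1/e" "t > 1/e2" "t \<ge> T0" using that T1 unfolding T_def by auto
    have "inverse t < e" using tp e(1) by (simp add: field_simps)
    hence "eval_fps F (inverse t) = g (1/t)" using e(2)[of "inverse t"] tp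
      by (simp add: inverse_eq_divide)
    moreover have "inverse t < e2" using tp e2(1) by (simp add: field_simps)
    ultimately show ?thesis using T0[of t] tp e2(2)
      by (auto intro: order.strict_trans[of _ "ereal e2"])
  qed
  show ?thesis
  proof (cases "F = 0")
    case True
    have u0: "t > T \<Longrightarrow> u t = 0" for t using key[of t] True by simp
    have P1: "\<forall>t>T. (u has_real_derivative 0) (at t)"
    proof (intro allI impI)
      fix t assume "t > T"
      have "((\<lambda>_. 0::real) has_real_derivative 0) (at t)" by simp
      thus "(u has_real_derivative 0) (at t)"
        by (rule has_field_derivative_transform_within_open[of _ _ _ "{T<..}"])
           (use \<open>t > T\<close> u0 in auto)
    qed
    have P3: "filterlim u at_top at_top \<longrightarrow> (\<exists>c>0. eventually (\<lambda>t. c * u t \<le> t * 0) at_top)"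
    proof
      assume "filterlim u at_top at_top"
      hence "eventually (\<lambda>t. 1 \<le> u t) at_top" by (simp add: filterlim_at_top)
      moreover have "eventually (\<lambda>t. t > T) at_top" by (rule eventually_gt_at_top)
      ultimately have "eventually (\<lambda>t. 1 \<le> u t \<and> t > T) at_top"
        by (rule eventually_conj)
      hence "eventually (\<lambda>t::real. False) at_top"
        by (rule eventually_mono) (use u0 in force)
      thus "\<exists>c>0. eventually (\<lambda>t. c * u t \<le> t * 0) at_top" by simp
    qed
    show ?thesis
      by (rule exI[of _ "\<lambda>_. 0"], rule exI[of _ T]) (use P1 P3 in auto)
  next
    case False
    define m where "m = subdegree F"
    define G where "G = fps_shift m F"
    define q where "q = eval_fps G"
    define q' where "q' = eval_fps (fps_deriv G)"
    define k where "k = int N - int m"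
    have radG: "fps_conv_radius G = fps_conv_radius F" by (simp add: G_def)
    have radG': "fps_conv_radius G \<le> fps_conv_radius (fps_deriv G)"
      by (rule fps_conv_radius_deriv)
    have FG: "F = G * fps_X ^ m" unfolding G_def m_def
      by (simp add: fps_shift_times_fps_X_power)
    have evF: "eval_fps F z = q z * z ^ m" if "ereal (norm z) < fps_conv_radius F" for z
    proof -
      have "eval_fps F z = eval_fps (G * fps_X ^ m) z" using FG by simp
      also have "\<dots> = q z * z ^ m" unfolding q_def
        by (subst eval_fps_mult) (use that radG in auto)
      finally show ?thesis .
    qed
    have q0: "q 0 \<noteq> 0" using False
      by (simp add: q_def eval_fps_at_0 G_def m_def)
    have cq: "isCont q 0" unfolding q_def
      by (rule continuous_eval_fps) (use rad radG in \<open>simp add: zero_ereal_def\<close>)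
    have cq': "isCont q' 0" unfolding q'_def
      by (rule continuous_eval_fps) (use rad radG radG' in \<open>auto simp add: zero_ereal_def\<close>)
    have Q: "((\<lambda>t. q (inverse t)) \<longlongrightarrow> q 0) at_top"
      by (rule isCont_tendsto_compose[OF cq tendsto_inverse_0_at_top[OF filterlim_ident]])
    have Q': "((\<lambda>t. q' (inverse t)) \<longlongrightarrow> q' 0) at_top"
      by (rule isCont_tendsto_compose[OF cq' tendsto_inverse_0_at_top[OF filterlim_ident]])
    have pw: "t ^ N * (inverse t) ^ m = t powi k" if "t \<noteq> 0" for t :: real
    proof -
      have "t powi k = t powi (int N + (- int m))" by (simp add: k_def)
      also have "\<dots> = t powi int N * t powi (- int m)" using that by (rule power_int_add[OF disjI1])
      also have "\<dots> = t ^ N * inverse t ^ m"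
        by (simp add: power_int_minus power_inverse)
      finally show ?thesis by simp
    qed
    have uV: "u t = t powi k * q (inverse t)" if "t > T" for t
    proof -
      have "u t = t ^ N * (q (inverse t) * inverse t ^ m)" using key[OF that] evF by auto
      also have "\<dots> = (t ^ N * inverse t ^ m) * q (inverse t)" by simp
      finally show ?thesis using pw[of t] that T1 by simp
    qed
    define u' where "u' t = of_int k * t powi (k - 1) * q (inverse t) + 
         (q' (inverse t) * - (inverse t ^ Suc (Suc 0))) * t powi k" for t
    have deriv: "(u has_real_derivative u' t) (at t)" if "t > T" for t
    proof -
      have t0: "t \<noteq> 0" using that T1 by auto
      have d1: "((\<lambda>t. t powi k) has_real_derivative of_int k * t powi (k - 1)) (at t)"
        using t0 by (auto intro!: derivative_eq_intros)
      have d2: "(q has_real_derivative q' (inverse t)) (at (inverse t))"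
        unfolding q_def q'_def
        by (rule has_field_derivative_eval_fps) (use key[OF that] radG in simp)
      have d3: "((\<lambda>t. q (inverse t)) has_real_derivative q' (inverse t) * - (inverse t ^ Suc (Suc 0))) (at t)"
        by (rule DERIV_chain2[OF d2 DERIV_inverse[OF t0]])
      have "((\<lambda>t. t powi k * q (inverse t)) has_real_derivative u' t) (at t)"
        unfolding u'_def by (rule DERIV_mult[OF d1 d3])
      thus ?thesis
        by (rule has_field_derivative_transform_within_open[of _ _ _ "{T<..}"])
           (use that uV in auto)
    qed
    have tu': "t * u' t = of_int k * t powi k * q (inverse t) - t powi (k - 1) * q' (inverse t)"
      if "t \<noteq> 0" for t :: real
    proof -
      have a: "t * t powi (k - 1) = t powi k"
        using power_int_add[of t 1 "k - 1"] that by simp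
      have b: "t powi (k - 1) = t powi k * inverse t"
        using power_int_add[of t k "-1"] that by simp
      have c: "t * inverse t ^ Suc (Suc 0) * t powi k = t powi (k - 1)"
        unfolding b using that by (simp add: field_simps)
      have "t * u' t = of_int k * (t * t powi (k - 1)) * q (inverse t)
              - (t * inverse t ^ Suc (Suc 0) * t powi k) * q' (inverse t)"
        unfolding u'_def by (simp add: algebra_simps)
      also have "\<dots> = of_int k * t powi k * q (inverse t) - t powi (k - 1) * q' (inverse t)"
        by (simp only: a c)
      finally show ?thesis .
    qed
    have evT: "eventually (\<lambda>t. t > T) at_top" by (rule eventually_gt_at_top)
    have P2: "\<forall>L. (u \<longlongrightarrow> L) at_top \<longrightarrow> ((\<lambda>t. t * u' t) \<longlongrightarrow> 0) at_top"
    proof (intro allI impI)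
      fix L assume uL: "(u \<longlongrightarrow> L) at_top"
      have kle: "k \<le> 0"
      proof (rule ccontr)
        assume "\<not> k \<le> 0"
        hence "filterlim (\<lambda>t::real. t ^ nat k) at_top at_top"
          by (intro filterlim_pow_at_top filterlim_ident) auto
        hence "filterlim (\<lambda>t::real. t ^ nat k) at_infinity at_top"
          by (rule filterlim_at_top_imp_at_infinity)
        hence fl: "filterlim (\<lambda>t. q (inverse t) * t ^ nat k) at_infinity at_top"
          by (rule tendsto_mult_filterlim_at_infinity[OF Q q0])
        have pk: "t powi k = t ^ nat k" for t :: real using \<open>\<not> k \<le> 0\<close> by (simp add: power_int_def)
        have evq: "eventually (\<lambda>t. q (inverse t) * t ^ nat k = u t) at_top"
          using evT by (rule eventually_mono) (simp add: uV pk)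
        have "filterlim u at_infinity at_top"
          using filterlim_cong[OF refl refl evq] fl by simp
        thus False using not_tendsto_and_filterlim_at_infinity[OF _ uL] by simp
      qed
      have A: "((\<lambda>t::real. of_int k * t powi k) \<longlongrightarrow> 0) at_top"
      proof (cases "k = 0")
        case True thus ?thesis by simp
      next
        case False
        hence "k < 0" using kle by simp
        from tendsto_mult[OF tendsto_const powi_neg_tendsto0[OF this], of "of_int k"]
        show ?thesis by simp
      qed
      have B: "((\<lambda>t::real. t powi (k - 1)) \<longlongrightarrow> 0) at_top"
        using kle by (intro powi_neg_tendsto0) simp
      have "((\<lambda>t. of_int k * t powi k * q (inverse t) - t powi (k - 1) * q' (inverse t)) \<longlongrightarrow> 0 * q 0 - 0 * q' 0) at_top"
        by (intro tendsto_diff tendsto_mult A B Q Q')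
      hence "((\<lambda>t. of_int k * t powi k * q (inverse t) - t powi (k - 1) * q' (inverse t)) \<longlongrightarrow> 0) at_top"
        by simp
      moreover have "eventually (\<lambda>t. of_int k * t powi k * q (inverse t) - t powi (k - 1) * q' (inverse t) = t * u' t) at_top"
        using evT by eventually_elim (use T1 tu' in auto)
      ultimately show "((\<lambda>t. t * u' t) \<longlongrightarrow> 0) at_top" by (rule Lim_transform_eventually)
    qed
    have P3: "filterlim u at_top at_top \<longrightarrow> (\<exists>c>0. eventually (\<lambda>t. c * u t \<le> t * u' t) at_top)"
    proof
      assume uinf: "filterlim u at_top at_top"
      have kpos: "k > 0"
      proof (rule ccontr)
        assume nk: "\<not> k > 0"
        have "\<exists>l. ((\<lambda>t. t powi k * q (inverse t)) \<longlongrightarrow> l) at_top"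
        proof (cases "k = 0")
          case True thus ?thesis using Q by auto
        next
          case False
          hence "k < 0" using nk by simp
          thus ?thesis using tendsto_mult[OF powi_neg_tendsto0 Q] by blast
        qed
        then obtain l where "((\<lambda>t. t powi k * q (inverse t)) \<longlongrightarrow> l) at_top" by blast
        moreover have "eventually (\<lambda>t. t powi k * q (inverse t) = u t) at_top"
          using evT by eventually_elim (use uV in auto)
        ultimately have "(u \<longlongrightarrow> l) at_top" by (rule Lim_transform_eventually)
        moreover have "filterlim u at_infinity at_top"
          by (rule filterlim_at_top_imp_at_infinity[OF uinf])
        ultimately show False using not_tendsto_and_filterlim_at_infinity[of at_top u l] by simp
      qed
      have "eventually (\<lambda>t. 0 \<le> q (inverse t)) at_top"
      proof -
        have "eventually (\<lambda>t. 1 \<le> u t) at_top" using uinf by (simp add: filterlim_at_top)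
        with evT show ?thesis
        proof eventually_elim
          case (elim t)
          hence "0 < t powi k * q (inverse t)" using uV by simp
          moreover have "0 < t powi k" using elim T1 by simp
          ultimately show ?case by (simp add: zero_less_mult_iff)
        qed
      qed
      hence "0 \<le> q 0" by (rule tendsto_lowerbound[OF Q]) simp
      hence q0p: "q 0 > 0" using q0 by simp
      have Z: "((\<lambda>t. (of_int k - 1/2) * q (inverse t) - inverse t * q' (inverse t)) \<longlongrightarrow>
                 (of_int k - 1/2) * q 0 - 0 * q' 0) at_top"
        by (intro tendsto_intros Q Q' tendsto_inverse_0_at_top filterlim_ident)
      have "(of_int k - 1/2) * q 0 - 0 * q' 0 > (0::real)" using kpos q0p by simp
      from order_tendstoD(1)[OF Z this]
      have evZ: "eventually (\<lambda>t. 0 < (of_int k - 1/2) * q (inverse t) - inverse t * q' (inverse t)) at_top" .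
      have "eventually (\<lambda>t. 1/2 * u t \<le> t * u' t) at_top"
        using evT evZ
      proof eventually_elim
        case (elim t)
        have t0: "t > 0" using elim T1 by simp
        have b: "t powi (k - 1) = t powi k * inverse t"
          using power_int_add[of t k "-1"] t0 by simp
        have "t * u' t - 1/2 * u t = t powi k * ((of_int k - 1/2) * q (inverse t) - inverse t * q' (inverse t))"
          using t0 elim by (simp add: tu' uV b algebra_simps)
        moreover have "0 < t powi k * ((of_int k - 1/2) * q (inverse t) - inverse t * q' (inverse t))"
          using elim t0 by simp
        ultimately show ?case by simp
      qed
      thus "\<exists>c>0. eventually (\<lambda>t. c * u t \<le> t * u' t) at_top" by (intro exI[of _ "1/2"]) auto
    qed
    show ?thesis
      by (rule exI[of _ u'], rule exI[of _ T]) (use deriv P2 P3 in auto)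
  qed
qed



lemma dep_of_not_surj:
  fixes l1 l2 :: "'a::real_vector \<Rightarrow> real"
  assumes l1: "linear l1" and l2: "linear l2" and w: "l2 w \<noteq> 0"
    and ns: "\<not> surj (\<lambda>v. (l1 v, l2 v))"
  shows "\<exists>\<mu>. \<forall>v. l1 v = \<mu> * l2 v"
proof (rule ccontr)
  assume H: "\<not> (\<exists>\<mu>. \<forall>v. l1 v = \<mu> * l2 v)"
  define v2 where "v2 = (1 / l2 w) *\<^sub>R w"
  have l2v2: "l2 v2 = 1" using w by (simp add: v2_def linear_cmul[OF l2])
  from H obtain v where v: "l1 v \<noteq> l1 v2 * l2 v" by auto
  define u where "u = v - l2 v *\<^sub>R v2"
  have l2u: "l2 u = 0" by (simp add: u_def linear_diff[OF l2] linear_cmul[OF l2] l2v2)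
  have l1u: "l1 u \<noteq> 0" using v by (simp add: u_def linear_diff[OF l1] linear_cmul[OF l1] mult.commute)
  have "surj (\<lambda>v. (l1 v, l2 v))"
  proof (rule surjI[where f = "\<lambda>(p,q). ((p - q * l1 v2) / l1 u) *\<^sub>R u + q *\<^sub>R v2"])
    fix pq :: "real \<times> real"
    obtain p q where pq: "pq = (p, q)" by (cases pq)
    show "(\<lambda>v. (l1 v, l2 v)) ((\<lambda>(p,q). ((p - q * l1 v2) / l1 u) *\<^sub>R u + q *\<^sub>R v2) pq) = pq"
      using l1u by (simp add: pq linear_add[OF l1] linear_add[OF l2] linear_cmul[OF l1]
          linear_cmul[OF l2] l2u l2v2)
  qed
  thus False using ns by simp
qed

definition monof :: "('n \<Rightarrow> nat) \<Rightarrow> ('n \<Rightarrow> real) \<Rightarrow> real" where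
  "monof \<alpha> y = (\<Prod>i\<in>UNIV. y i ^ \<alpha> i)"

definition dexp :: "('n \<Rightarrow> nat) \<Rightarrow> 'n \<Rightarrow> ('n \<Rightarrow> nat)" where
  "dexp \<alpha> i = (\<lambda>j. if j = i then \<alpha> i - 1 else \<alpha> j)"

definition dmonof :: "('n \<Rightarrow> nat) \<Rightarrow> 'n \<Rightarrow> ('n \<Rightarrow> real) \<Rightarrow> real" where
  "dmonof \<alpha> i y = of_nat (\<alpha> i) * monof (dexp \<alpha> i) y"

lemma has_derivative_monof:
  fixes g :: "'n::finite \<Rightarrow> 'a::real_normed_vector \<Rightarrow> real"
  assumes "\<And>i. (g i has_derivative g' i) (at z within S)"
  shows "((\<lambda>z. monof \<alpha> (\<lambda>i. g i z)) has_derivative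
           (\<lambda>v. \<Sum>i\<in>UNIV. g' i v * dmonof \<alpha> i (\<lambda>j. g j z))) (at z within S)"
proof -
  have "((\<lambda>z. \<Prod>i\<in>UNIV. g i z ^ \<alpha> i) has_derivative
     (\<lambda>v. \<Sum>i\<in>UNIV. (of_nat (\<alpha> i) * g' i v * g i z ^ (\<alpha> i - 1)) * (\<Prod>j\<in>UNIV - {i}. g j z ^ \<alpha> j))) (at z within S)"
    by (rule has_derivative_prod) (intro has_derivative_power assms)
  moreover have "(\<lambda>v. \<Sum>i\<in>UNIV. (of_nat (\<alpha> i) * g' i v * g i z ^ (\<alpha> i - 1)) * (\<Prod>j\<in>UNIV - {i}. g j z ^ \<alpha> j))
     = (\<lambda>v. \<Sum>i\<in>UNIV. g' i v * dmonof \<alpha> i (\<lambda>j. g j z))"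
  proof (intro ext sum.cong refl)
    fix v i
    have "monof (dexp \<alpha> i) (\<lambda>j. g j z) = g i z ^ (\<alpha> i - 1) * (\<Prod>j\<in>UNIV - {i}. g j z ^ \<alpha> j)"
      unfolding monof_def
      by (subst prod.remove[of UNIV i]) (auto simp: dexp_def intro!: prod.cong)
    thus "(of_nat (\<alpha> i) * g' i v * g i z ^ (\<alpha> i - 1)) * (\<Prod>j\<in>UNIV - {i}. g j z ^ \<alpha> j) =
          g' i v * dmonof \<alpha> i (\<lambda>j. g j z)"
      by (simp add: dmonof_def)
  qed
  ultimately show ?thesis by (simp add: monof_def)
qed

lemma prod_abs_le:
  fixes b :: "'i \<Rightarrow> real"
  assumes "\<And>i. i \<in> S \<Longrightarrow> \<bar>b i\<bar> \<le> B"
  shows "\<bar>prod b S\<bar> \<le> B ^ card S"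
proof -
  have "prod (\<lambda>i. \<bar>b i\<bar>) S \<le> prod (\<lambda>_. B) S"
    by (rule prod_mono) (use assms in auto)
  thus ?thesis by (simp add: abs_prod)
qed

lemma prod_diff_bound:
  fixes a b :: "'i \<Rightarrow> real"
  assumes "finite S" "B \<ge> 0" "\<And>i. i \<in> S \<Longrightarrow> \<bar>a i\<bar> \<le> B" "\<And>i. i \<in> S \<Longrightarrow> \<bar>b i\<bar> \<le> B"
    "\<And>i. i \<in> S \<Longrightarrow> \<bar>a i - b i\<bar> \<le> \<delta>"
  shows "\<bar>prod a S - prod b S\<bar> \<le> real (card S) * \<delta> * B ^ (card S - 1)"
  using assms(1,3-5)
proof (induction S rule: finite_induct)
  case empty thus ?case by simp
next
  case (insert x S)
  have IH: "\<bar>prod a S - prod b S\<bar> \<le> real (card S) * \<delta> * B ^ (card S - 1)"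
    using insert by auto
  have ax: "\<bar>a x\<bar> \<le> B" and dx: "\<bar>a x - b x\<bar> \<le> \<delta>" using insert by auto
  have d0: "\<delta> \<ge> 0" using dx by linarith
  have pb: "\<bar>prod b S\<bar> \<le> B ^ card S"
    using insert.prems(2) by (intro prod_abs_le) auto
  have "prod a (insert x S) - prod b (insert x S) = a x * (prod a S - prod b S) + (a x - b x) * prod b S"
    using insert.hyps by (simp add: algebra_simps)
  hence "\<bar>prod a (insert x S) - prod b (insert x S)\<bar> \<le> \<bar>a x\<bar> * \<bar>prod a S - prod b S\<bar> + \<bar>a x - b x\<bar> * \<bar>prod b S\<bar>"
    by (metis abs_mult abs_triangle_ineq)
  also have "\<dots> \<le> B * (real (card S) * \<delta> * B ^ (card S - 1)) + \<delta> * B ^ card S"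
    by (intro add_mono mult_mono ax IH dx pb) (use assms(2) d0 in auto)
  also have "B * (real (card S) * \<delta> * B ^ (card S - 1)) = real (card S) * \<delta> * B ^ card S"
  proof (cases "card S = 0")
    case True thus ?thesis by simp
  next
    case False
    hence "B * B ^ (card S - 1) = B ^ card S" by (metis power_eq_if)
    thus ?thesis by (simp add: algebra_simps)
  qed
  also have "real (card S) * \<delta> * B ^ card S + \<delta> * B ^ card S = real (card (insert x S)) * \<delta> * B ^ (card (insert x S) - 1)"
    using insert.hyps by (simp add: algebra_simps)
  finally show ?case .
qed

lemma monof_as_prod:
  fixes \<beta> :: "'n::finite \<Rightarrow> nat"
  shows "monof \<beta> y = (\<Prod>p\<in>Sigma UNIV (\<lambda>i. {..<\<beta> i}). y (fst p))"
  unfolding monof_def using prod.Sigma[of UNIV "\<lambda>i. {..<\<beta> i}" "\<lambda>i k. y i"]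
  by (simp add: split_def)

lemma card_Sigma_exp: "card (Sigma (UNIV::'n::finite set) (\<lambda>i. {..<\<beta> i})) = (\<Sum>i\<in>UNIV. \<beta> i)"
  by (subst card_SigmaI) auto

lemma monof_diff_bound:
  fixes \<beta> :: "'n::finite \<Rightarrow> nat" and x y :: "'n \<Rightarrow> real"
  assumes "B \<ge> 0" "\<And>i. \<bar>x i\<bar> \<le> B" "\<And>i. \<bar>y i\<bar> \<le> B" "\<And>i. \<bar>x i - y i\<bar> \<le> \<delta>"
  shows "\<bar>monof \<beta> x - monof \<beta> y\<bar> \<le> real (\<Sum>i\<in>UNIV. \<beta> i) * \<delta> * B ^ ((\<Sum>i\<in>UNIV. \<beta> i) - 1)"
  unfolding monof_as_prod card_Sigma_exp[symmetric]
  by (rule prod_diff_bound) (use assms in auto)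

lemma monof_bound:
  fixes \<beta> :: "'n::finite \<Rightarrow> nat" and x :: "'n \<Rightarrow> real"
  assumes "\<And>i. \<bar>x i\<bar> \<le> B"
  shows "\<bar>monof \<beta> x\<bar> \<le> B ^ (\<Sum>i\<in>UNIV. \<beta> i)"
  unfolding monof_as_prod card_Sigma_exp[symmetric]
  by (rule prod_abs_le) (use assms in auto)



lemma pow_mono_aux:
  fixes B \<delta> :: real
  assumes "n \<le> e" "B \<ge> 1" "\<delta> \<ge> 0"
  shows "real n * \<delta> * B ^ (n - 1) \<le> real e * \<delta> * B ^ (e - 1)"
proof -
  have "B ^ (n - 1) \<le> B ^ (e - 1)" using assms by (intro power_increasing) auto
  moreover have "real n \<le> real e" using assms by simp
  ultimately show ?thesis using assms
    by (intro mult_mono) (auto intro: mult_nonneg_nonneg)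
qed

lemma sum_dexp:
  fixes \<alpha> :: "'n::finite \<Rightarrow> nat"
  assumes "\<alpha> i > 0"
  shows "(\<Sum>j\<in>UNIV. dexp \<alpha> i j) + 1 = (\<Sum>j\<in>UNIV. \<alpha> j)"
proof -
  have "(\<Sum>j\<in>UNIV. dexp \<alpha> i j) = dexp \<alpha> i i + (\<Sum>j\<in>UNIV - {i}. dexp \<alpha> i j)"
    by (subst sum.remove[of UNIV i]) auto
  also have "(\<Sum>j\<in>UNIV - {i}. dexp \<alpha> i j) = (\<Sum>j\<in>UNIV - {i}. \<alpha> j)"
    by (intro sum.cong) (auto simp: dexp_def)
  also have "(\<Sum>j\<in>UNIV. \<alpha> j) = \<alpha> i + (\<Sum>j\<in>UNIV - {i}. \<alpha> j)"
    by (subst sum.remove[of UNIV i]) auto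
  ultimately show ?thesis using assms by (simp add: dexp_def)
qed

lemma pw_est:
  fixes x y :: "'n::finite \<Rightarrow> real" and c :: "('n \<Rightarrow> nat) \<Rightarrow> real"
  assumes fin: "finite A" and deg: "\<And>\<alpha>. \<alpha> \<in> A \<Longrightarrow> (\<Sum>i\<in>UNIV. \<alpha> i) \<le> d" and d2: "d \<ge> 2"
    and B1: "B \<ge> 1" and d0: "\<delta> \<ge> 0"
    and bx: "\<And>j. \<bar>x j\<bar> \<le> B" and "\<And>j. \<bar>y j\<bar> \<le> B" and bxy: "\<And>j. \<bar>x j - y j\<bar> \<le> \<delta>"
  shows "\<bar>(\<Sum>\<alpha>\<in>A. c \<alpha> * monof \<alpha> x) - (\<Sum>\<alpha>\<in>A. c \<alpha> * monof \<alpha> y)\<bar>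
           \<le> (\<Sum>\<alpha>\<in>A. \<bar>c \<alpha>\<bar>) * (real d * \<delta> * B ^ (d - 1))"
    and "\<bar>(\<Sum>\<alpha>\<in>A. c \<alpha> * dmonof \<alpha> i x) - (\<Sum>\<alpha>\<in>A. c \<alpha> * dmonof \<alpha> i y)\<bar>
           \<le> (\<Sum>\<alpha>\<in>A. \<bar>c \<alpha>\<bar>) * (real d * (real d * \<delta> * B ^ (d - 2)))"
    and "\<bar>(\<Sum>\<alpha>\<in>A. c \<alpha> * dmonof \<alpha> i x)\<bar> \<le> (\<Sum>\<alpha>\<in>A. \<bar>c \<alpha>\<bar>) * (real d * B ^ (d - 1))"
proof -
  have B0: "B \<ge> 0" using B1 by simp
  show "\<bar>(\<Sum>\<alpha>\<in>A. c \<alpha> * monof \<alpha> x) - (\<Sum>\<alpha>\<in>A. c \<alpha> * monof \<alpha> y)\<bar>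
           \<le> (\<Sum>\<alpha>\<in>A. \<bar>c \<alpha>\<bar>) * (real d * \<delta> * B ^ (d - 1))"
  proof -
    have "\<bar>(\<Sum>\<alpha>\<in>A. c \<alpha> * monof \<alpha> x) - (\<Sum>\<alpha>\<in>A. c \<alpha> * monof \<alpha> y)\<bar>
          = \<bar>\<Sum>\<alpha>\<in>A. c \<alpha> * (monof \<alpha> x - monof \<alpha> y)\<bar>"
      by (simp add: sum_subtractf[symmetric] algebra_simps)
    also have "\<dots> \<le> (\<Sum>\<alpha>\<in>A. \<bar>c \<alpha>\<bar> * \<bar>monof \<alpha> x - monof \<alpha> y\<bar>)"
      by (rule order.trans[OF sum_abs]) (simp add: abs_mult)
    also have "\<dots> \<le> (\<Sum>\<alpha>\<in>A. \<bar>c \<alpha>\<bar> * (real d * \<delta> * B ^ (d - 1)))"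
    proof (rule sum_mono, rule mult_left_mono)
      fix \<alpha> assume "\<alpha> \<in> A"
      have "\<bar>monof \<alpha> x - monof \<alpha> y\<bar> \<le> real (\<Sum>i\<in>UNIV. \<alpha> i) * \<delta> * B ^ ((\<Sum>i\<in>UNIV. \<alpha> i) - 1)"
        by (rule monof_diff_bound) (use B0 assms in auto)
      also have "\<dots> \<le> real d * \<delta> * B ^ (d - 1)"
        by (rule pow_mono_aux) (use deg[OF \<open>\<alpha> \<in> A\<close>] B1 d0 in auto)
      finally show "\<bar>monof \<alpha> x - monof \<alpha> y\<bar> \<le> real d * \<delta> * B ^ (d - 1)" .
    qed simp
    also have "\<dots> = (\<Sum>\<alpha>\<in>A. \<bar>c \<alpha>\<bar>) * (real d * \<delta> * B ^ (d - 1))"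
      by (simp add: sum_distrib_right)
    finally show ?thesis .
  qed
  show "\<bar>(\<Sum>\<alpha>\<in>A. c \<alpha> * dmonof \<alpha> i x) - (\<Sum>\<alpha>\<in>A. c \<alpha> * dmonof \<alpha> i y)\<bar>
           \<le> (\<Sum>\<alpha>\<in>A. \<bar>c \<alpha>\<bar>) * (real d * (real d * \<delta> * B ^ (d - 2)))"
  proof -
    have "\<bar>(\<Sum>\<alpha>\<in>A. c \<alpha> * dmonof \<alpha> i x) - (\<Sum>\<alpha>\<in>A. c \<alpha> * dmonof \<alpha> i y)\<bar>
          = \<bar>\<Sum>\<alpha>\<in>A. c \<alpha> * (dmonof \<alpha> i x - dmonof \<alpha> i y)\<bar>"
      by (simp add: sum_subtractf[symmetric] algebra_simps)
    also have "\<dots> \<le> (\<Sum>\<alpha>\<in>A. \<bar>c \<alpha>\<bar> * \<bar>dmonof \<alpha> i x - dmonof \<alpha> i y\<bar>)"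
      by (rule order.trans[OF sum_abs]) (simp add: abs_mult)
    also have "\<dots> \<le> (\<Sum>\<alpha>\<in>A. \<bar>c \<alpha>\<bar> * (real d * (real d * \<delta> * B ^ (d - 2))))"
    proof (rule sum_mono, rule mult_left_mono)
      fix \<alpha> assume "\<alpha> \<in> A"
      show "\<bar>dmonof \<alpha> i x - dmonof \<alpha> i y\<bar> \<le> real d * (real d * \<delta> * B ^ (d - 2))"
      proof (cases "\<alpha> i = 0")
        case True thus ?thesis using d0 B0 by (simp add: dmonof_def)
      next
        case False
        have s: "(\<Sum>j\<in>UNIV. dexp \<alpha> i j) + 1 = (\<Sum>j\<in>UNIV. \<alpha> j)" using False by (intro sum_dexp) simp
        have ai: "\<alpha> i \<le> d"
          using deg[OF \<open>\<alpha> \<in> A\<close>] member_le_sum[of i UNIV \<alpha>] by simp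
        have "\<bar>monof (dexp \<alpha> i) x - monof (dexp \<alpha> i) y\<bar>
            \<le> real (\<Sum>j\<in>UNIV. dexp \<alpha> i j) * \<delta> * B ^ ((\<Sum>j\<in>UNIV. dexp \<alpha> i j) - 1)"
          by (rule monof_diff_bound) (use B0 assms in auto)
        also have "\<dots> \<le> real (d - 1) * \<delta> * B ^ ((d - 1) - 1)"
          by (rule pow_mono_aux) (use deg[OF \<open>\<alpha> \<in> A\<close>] s B1 d0 in auto)
        also have "\<dots> \<le> real d * \<delta> * B ^ (d - 2)"
          using d0 B0 by (intro mult_right_mono mult_mono) (auto simp: numeral_2_eq_2)
        finally have m: "\<bar>monof (dexp \<alpha> i) x - monof (dexp \<alpha> i) y\<bar> \<le> real d * \<delta> * B ^ (d - 2)" .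
        have "\<bar>dmonof \<alpha> i x - dmonof \<alpha> i y\<bar> = real (\<alpha> i) * \<bar>monof (dexp \<alpha> i) x - monof (dexp \<alpha> i) y\<bar>"
          by (simp add: dmonof_def abs_mult flip: right_diff_distrib)
        also have "\<dots> \<le> real d * (real d * \<delta> * B ^ (d - 2))"
          using ai m by (intro mult_mono) auto
        finally show ?thesis .
      qed
    qed simp
    also have "\<dots> = (\<Sum>\<alpha>\<in>A. \<bar>c \<alpha>\<bar>) * (real d * (real d * \<delta> * B ^ (d - 2)))"
      by (simp add: sum_distrib_right)
    finally show ?thesis .
  qed
  show "\<bar>(\<Sum>\<alpha>\<in>A. c \<alpha> * dmonof \<alpha> i x)\<bar> \<le> (\<Sum>\<alpha>\<in>A. \<bar>c \<alpha>\<bar>) * (real d * B ^ (d - 1))"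
  proof -
    have "\<bar>(\<Sum>\<alpha>\<in>A. c \<alpha> * dmonof \<alpha> i x)\<bar> \<le> (\<Sum>\<alpha>\<in>A. \<bar>c \<alpha>\<bar> * \<bar>dmonof \<alpha> i x\<bar>)"
      by (rule order.trans[OF sum_abs]) (simp add: abs_mult)
    also have "\<dots> \<le> (\<Sum>\<alpha>\<in>A. \<bar>c \<alpha>\<bar> * (real d * B ^ (d - 1)))"
    proof (rule sum_mono, rule mult_left_mono)
      fix \<alpha> assume "\<alpha> \<in> A"
      show "\<bar>dmonof \<alpha> i x\<bar> \<le> real d * B ^ (d - 1)"
      proof (cases "\<alpha> i = 0")
        case True thus ?thesis using B0 by (simp add: dmonof_def)
      next
        case False
        have s: "(\<Sum>j\<in>UNIV. dexp \<alpha> i j) + 1 = (\<Sum>j\<in>UNIV. \<alpha> j)" using False by (intro sum_dexp) simp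
        have ai: "\<alpha> i \<le> d"
          using deg[OF \<open>\<alpha> \<in> A\<close>] member_le_sum[of i UNIV \<alpha>] by simp
        have "\<bar>monof (dexp \<alpha> i) x\<bar> \<le> B ^ (\<Sum>j\<in>UNIV. dexp \<alpha> i j)"
          by (rule monof_bound) (use bx in auto)
        also have "\<dots> \<le> B ^ (d - 1)"
          by (rule power_increasing) (use s deg[OF \<open>\<alpha> \<in> A\<close>] B1 in auto)
        finally have m: "\<bar>monof (dexp \<alpha> i) x\<bar> \<le> B ^ (d - 1)" .
        show ?thesis unfolding dmonof_def abs_mult
          using ai m by (intro mult_mono) auto
      qed
    qed simp
    also have "\<dots> = (\<Sum>\<alpha>\<in>A. \<bar>c \<alpha>\<bar>) * (real d * B ^ (d - 1))"
      by (simp add: sum_distrib_right)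
    finally show ?thesis .
  qed
qed



lemma poly_repr:
  assumes "poly_fun_of_degree (f :: real^'n \<Rightarrow> real) d"
  obtains c A where "finite A" "\<And>x. f x = (\<Sum>\<alpha>\<in>A. c \<alpha> * monof \<alpha> (\<lambda>i. x $ i))"
    "\<And>\<alpha>. \<alpha> \<in> A \<Longrightarrow> (\<Sum>i\<in>UNIV. \<alpha> i) \<le> d"
  using assms unfolding poly_fun_of_degree_def monof_def by blast

definition pf :: "('n \<Rightarrow> nat) set \<Rightarrow> (('n \<Rightarrow> nat) \<Rightarrow> real) \<Rightarrow> 'n \<Rightarrow> real^'n \<Rightarrow> real" where
  "pf A c i x = (\<Sum>\<alpha>\<in>A. c \<alpha> * dmonof \<alpha> i (\<lambda>j. x $ j))"

lemma f_deriv: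
  fixes f :: "real^'n \<Rightarrow> real"
  assumes fx: "\<And>x. f x = (\<Sum>\<alpha>\<in>A. c \<alpha> * monof \<alpha> (\<lambda>i. x $ i))"
  shows "(f has_derivative (\<lambda>v. \<Sum>i\<in>UNIV. v $ i * pf A c i x)) (at x within S)"
proof -
  have f: "f = (\<lambda>x. \<Sum>\<alpha>\<in>A. c \<alpha> * monof \<alpha> (\<lambda>i. x $ i))" using fx by auto
  have "((\<lambda>x. \<Sum>\<alpha>\<in>A. c \<alpha> * monof \<alpha> (\<lambda>i. x $ i)) has_derivative
        (\<lambda>v. \<Sum>\<alpha>\<in>A. c \<alpha> * (\<Sum>i\<in>UNIV. v $ i * dmonof \<alpha> i (\<lambda>j. x $ j)))) (at x within S)"
    by (intro has_derivative_sum has_derivative_mult_right has_derivative_monof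
          bounded_linear_imp_has_derivative bounded_linear_vec_nth)
  moreover have "(\<lambda>v. \<Sum>\<alpha>\<in>A. c \<alpha> * (\<Sum>i\<in>UNIV. v $ i * dmonof \<alpha> i (\<lambda>j. x $ j)))
      = (\<lambda>v. \<Sum>i\<in>UNIV. v $ i * pf A c i x)"
  proof (rule ext)
    fix v :: "real^'n"
    have "(\<Sum>\<alpha>\<in>A. c \<alpha> * (\<Sum>i\<in>UNIV. v $ i * dmonof \<alpha> i (\<lambda>j. x $ j)))
        = (\<Sum>\<alpha>\<in>A. \<Sum>i\<in>UNIV. c \<alpha> * (v $ i * dmonof \<alpha> i (\<lambda>j. x $ j)))"
      by (simp add: sum_distrib_left)
    also have "\<dots> = (\<Sum>i\<in>UNIV. \<Sum>\<alpha>\<in>A. c \<alpha> * (v $ i * dmonof \<alpha> i (\<lambda>j. x $ j)))"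
      by (rule sum.swap)
    also have "\<dots> = (\<Sum>i\<in>UNIV. v $ i * pf A c i x)"
      by (simp add: sum_distrib_left pf_def ac_simps)
    finally show "(\<Sum>\<alpha>\<in>A. c \<alpha> * (\<Sum>i\<in>UNIV. v $ i * dmonof \<alpha> i (\<lambda>j. x $ j)))
        = (\<Sum>i\<in>UNIV. v $ i * pf A c i x)" .
  qed
  ultimately show ?thesis by (simp add: f)
qed

lemma f_deriv_comp:
  fixes f :: "real^'n \<Rightarrow> real" and g :: "real \<Rightarrow> real^'n"
  assumes fx: "\<And>x. f x = (\<Sum>\<alpha>\<in>A. c \<alpha> * monof \<alpha> (\<lambda>i. x $ i))"
    and dg: "\<And>i. ((\<lambda>t. g t $ i) has_real_derivative g' i) (at t)"
  shows "((\<lambda>t. f (g t)) has_real_derivative (\<Sum>i\<in>UNIV. g' i * pf A c i (g t))) (at t)"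
proof -
  have f: "(\<lambda>t. f (g t)) = (\<lambda>t. \<Sum>\<alpha>\<in>A. c \<alpha> * monof \<alpha> (\<lambda>i. g t $ i))" using fx by auto
  have dg': "((\<lambda>t. g t $ i) has_derivative (\<lambda>s. s * g' i)) (at t)" for i
  proof -
    have e: "(\<lambda>s. s * g' i) = (*) (g' i)" by (rule ext) simp
    show ?thesis using dg[of i] by (simp add: has_field_derivative_def e)
  qed
  have "((\<lambda>t. \<Sum>\<alpha>\<in>A. c \<alpha> * monof \<alpha> (\<lambda>i. g t $ i)) has_derivative
        (\<lambda>s. \<Sum>\<alpha>\<in>A. c \<alpha> * (\<Sum>i\<in>UNIV. s * g' i * dmonof \<alpha> i (\<lambda>j. g t $ j)))) (at t)"
  proof -
    have m: "((\<lambda>t. monof \<alpha> (\<lambda>i. g t $ i)) has_derivative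
              (\<lambda>s. \<Sum>i\<in>UNIV. s * g' i * dmonof \<alpha> i (\<lambda>j. g t $ j))) (at t)" for \<alpha>
      by (rule has_derivative_monof[OF dg'])
    show ?thesis
      by (rule has_derivative_sum, rule has_derivative_mult_right, rule m)
  qed
  moreover have "(\<lambda>s. \<Sum>\<alpha>\<in>A. c \<alpha> * (\<Sum>i\<in>UNIV. s * g' i * dmonof \<alpha> i (\<lambda>j. g t $ j)))
      = (*) (\<Sum>i\<in>UNIV. g' i * pf A c i (g t))"
  proof (rule ext)
    fix s
    have "(\<Sum>\<alpha>\<in>A. c \<alpha> * (\<Sum>i\<in>UNIV. s * g' i * dmonof \<alpha> i (\<lambda>j. g t $ j)))
        = (\<Sum>\<alpha>\<in>A. \<Sum>i\<in>UNIV. c \<alpha> * (s * g' i * dmonof \<alpha> i (\<lambda>j. g t $ j)))"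
      by (simp add: sum_distrib_left)
    also have "\<dots> = (\<Sum>i\<in>UNIV. \<Sum>\<alpha>\<in>A. c \<alpha> * (s * g' i * dmonof \<alpha> i (\<lambda>j. g t $ j)))"
      by (rule sum.swap)
    also have "\<dots> = (\<Sum>i\<in>UNIV. (s * g' i) * (\<Sum>\<alpha>\<in>A. c \<alpha> * dmonof \<alpha> i (\<lambda>j. g t $ j)))"
      by (simp add: sum_distrib_left ac_simps)
    also have "\<dots> = s * (\<Sum>i\<in>UNIV. g' i * pf A c i (g t))"
      by (simp add: sum_distrib_left pf_def ac_simps)
    finally show "(\<Sum>\<alpha>\<in>A. c \<alpha> * (\<Sum>i\<in>UNIV. s * g' i * dmonof \<alpha> i (\<lambda>j. g t $ j)))
        = (\<Sum>i\<in>UNIV. g' i * pf A c i (g t)) * s" by simp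
  qed
  ultimately show ?thesis by (simp add: f has_field_derivative_def)
qed

lemma partial_eq:
  fixes f :: "real^'n \<Rightarrow> real"
  assumes fx: "\<And>x. f x = (\<Sum>\<alpha>\<in>A. c \<alpha> * monof \<alpha> (\<lambda>i. x $ i))"
  shows "partial f i x = pf A c i x"
proof -
  have d1: "((\<lambda>s::real. x + s *\<^sub>R axis i 1) has_derivative (\<lambda>s. s *\<^sub>R axis i 1)) (at 0)"
    by (auto intro!: derivative_eq_intros)
  have d2: "(f has_derivative (\<lambda>v. \<Sum>j\<in>UNIV. v $ j * pf A c j x)) (at (x + 0 *\<^sub>R axis i 1))"
    using f_deriv[OF fx] by simp
  have "((\<lambda>s. f (x + s *\<^sub>R axis i 1)) has_derivative
        (\<lambda>s. \<Sum>j\<in>UNIV. (s *\<^sub>R axis i 1) $ j * pf A c j x)) (at 0)"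
    by (rule diff_chain_at[OF d1 d2, unfolded o_def])
  moreover have "(\<lambda>s. \<Sum>j\<in>UNIV. (s *\<^sub>R axis i 1) $ j * pf A c j x) = (*) (pf A c i x)"
  proof (rule ext)
    fix s
    have "(\<Sum>j\<in>UNIV. (s *\<^sub>R axis i 1) $ j * pf A c j x) = (\<Sum>j\<in>UNIV. if j = i then s * pf A c j x else 0)"
      by (rule sum.cong) (auto simp: axis_def)
    thus "(\<Sum>j\<in>UNIV. (s *\<^sub>R axis i 1) $ j * pf A c j x) = pf A c i x * s" by simp
  qed
  ultimately have "((\<lambda>s. f (x + s *\<^sub>R axis i 1)) has_real_derivative pf A c i x) (at 0)"
    by (simp add: has_field_derivative_def)
  thus ?thesis unfolding partial_def by (rule DERIV_imp_deriv)
qed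

lemma rho_deriv: "(rho a has_derivative (\<lambda>v. 2 * ((x - a) \<bullet> v))) (at x)"
proof -
  have r: "rho a = (\<lambda>y. (y - a) \<bullet> (y - a))" by (auto simp: rho_def power2_norm_eq_inner)
  show ?thesis unfolding r
    by (auto intro!: derivative_eq_intros simp: inner_commute)
qed

lemma milnor_dep:
  fixes f :: "real^'n \<Rightarrow> real"
  assumes fx: "\<And>x. f x = (\<Sum>\<alpha>\<in>A. c \<alpha> * monof \<alpha> (\<lambda>i. x $ i))"
    and xm: "x \<in> milnor_set f a" and xa: "x \<noteq> a"
  shows "\<exists>\<mu>. \<forall>v. (\<Sum>i\<in>UNIV. v $ i * pf A c i x) = \<mu> * (2 * ((x - a) \<bullet> v))"
proof -
  let ?l1 = "\<lambda>v. \<Sum>i\<in>UNIV. v $ i * pf A c i x"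
  let ?l2 = "\<lambda>v. 2 * ((x - a) \<bullet> v)"
  have df: "(f has_derivative ?l1) (at x)" by (rule f_deriv[OF fx])
  have dr: "(rho a has_derivative ?l2) (at x)" by (rule rho_deriv)
  have "((\<lambda>y. (f y, rho a y)) has_derivative (\<lambda>v. (?l1 v, ?l2 v))) (at x)"
    by (rule has_derivative_Pair[OF df dr])
  hence fe: "frechet_derivative (\<lambda>y. (f y, rho a y)) (at x) = (\<lambda>v. (?l1 v, ?l2 v))"
    by (rule frechet_derivative_at[symmetric])
  have ns: "\<not> surj (\<lambda>v. (?l1 v, ?l2 v))" using xm by (simp add: milnor_set_def fe)
  have l1: "linear ?l1" by (rule bounded_linear.linear[OF has_derivative_bounded_linear[OF df]])
  have l2: "linear ?l2" by (rule bounded_linear.linear[OF has_derivative_bounded_linear[OF dr]])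
  have w: "?l2 (x - a) \<noteq> 0" using xa by simp
  show ?thesis by (rule dep_of_not_surj[OF l1 l2 w ns])
qed



definition hasexp :: "(real \<Rightarrow> real) \<Rightarrow> bool" where
  "hasexp g \<longleftrightarrow> (\<exists>G. g has_fps_expansion G)"

lemma hasexp_const: "hasexp (\<lambda>_. c)"
  unfolding hasexp_def using has_fps_expansion_const by blast

lemma hasexp_pow: "hasexp (\<lambda>s. s ^ n)"
  unfolding hasexp_def using has_fps_expansion_fps_X_power by blast

lemma hasexp_add: "hasexp f \<Longrightarrow> hasexp g \<Longrightarrow> hasexp (\<lambda>s. f s + g s)"
  unfolding hasexp_def using has_fps_expansion_add by blast

lemma hasexp_diff: "hasexp f \<Longrightarrow> hasexp g \<Longrightarrow> hasexp (\<lambda>s. f s - g s)"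
  unfolding hasexp_def using has_fps_expansion_diff by blast

lemma hasexp_mult: "hasexp f \<Longrightarrow> hasexp g \<Longrightarrow> hasexp (\<lambda>s. f s * g s)"
  unfolding hasexp_def using has_fps_expansion_mult by blast

lemma hasexp_power: "hasexp f \<Longrightarrow> hasexp (\<lambda>s. f s ^ n)"
proof (induction n)
  case 0 thus ?case by (simp add: hasexp_const)
next
  case (Suc n)
  from hasexp_mult[OF Suc.prems Suc.IH[OF Suc.prems]] show ?case by simp
qed

lemma hasexp_sum: "(\<And>x. x \<in> A \<Longrightarrow> hasexp (f x)) \<Longrightarrow> hasexp (\<lambda>s. \<Sum>x\<in>A. f x s)"
proof (induction A rule: infinite_finite_induct)
  case (infinite A) thus ?case by (simp add: hasexp_const)
next
  case empty thus ?case by (simp add: hasexp_const)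
next
  case (insert x F)
  have "hasexp (\<lambda>s. f x s + (\<Sum>x\<in>F. f x s))"
    by (intro hasexp_add insert) auto
  thus ?case using insert.hyps by simp
qed

lemma hasexp_prod: "(\<And>x. x \<in> A \<Longrightarrow> hasexp (f x)) \<Longrightarrow> hasexp (\<lambda>s. \<Prod>x\<in>A. f x s)"
proof (induction A rule: infinite_finite_induct)
  case (infinite A) thus ?case by (simp add: hasexp_const)
next
  case empty thus ?case by (simp add: hasexp_const)
next
  case (insert x F)
  have "hasexp (\<lambda>s. f x s * (\<Prod>x\<in>F. f x s))"
    by (intro hasexp_mult insert) auto
  thus ?case using insert.hyps by simp
qed

lemma trunc_lim:
  fixes x y :: "real \<Rightarrow> real^'n" and c :: "('n \<Rightarrow> nat) \<Rightarrow> real"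
  assumes fin: "finite A" and deg: "\<And>\<alpha>. \<alpha> \<in> A \<Longrightarrow> (\<Sum>i\<in>UNIV. \<alpha> i) \<le> d" and d2: "d \<ge> 2"
    and C1: "C \<ge> 1" and C'0: "C' \<ge> 0"
    and ev: "eventually (\<lambda>t. \<forall>j. \<bar>x t $ j\<bar> \<le> C * t ^ D \<and> \<bar>y t $ j\<bar> \<le> C * t ^ D \<and>
                 \<bar>x t $ j - y t $ j\<bar> \<le> C' / t ^ ((d - 1) * D + 1)) at_top"
  shows "((\<lambda>t. (\<Sum>\<alpha>\<in>A. c \<alpha> * monof \<alpha> (\<lambda>i. x t $ i)) - (\<Sum>\<alpha>\<in>A. c \<alpha> * monof \<alpha> (\<lambda>i. y t $ i))) \<longlongrightarrow> 0) at_top"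
    and "((\<lambda>t. pf A c i (x t) - pf A c i (y t)) \<longlongrightarrow> 0) at_top"
    and "((\<lambda>t. y t $ j * pf A c i (y t) - x t $ j * pf A c i (x t)) \<longlongrightarrow> 0) at_top"
    and "((\<lambda>t. norm (x t - y t)) \<longlongrightarrow> 0) at_top"
proof -
  define B where "B t = C * t ^ D" for t :: real
  define \<delta> where "\<delta> t = C' / t ^ ((d - 1) * D + 1)" for t :: real
  define W where "W t = \<delta> t * B t ^ (d - 1)" for t
  define S where "S = (\<Sum>\<alpha>\<in>A. \<bar>c \<alpha>\<bar>)"
  have S0: "S \<ge> 0" unfolding S_def by (intro sum_nonneg) auto
  have Wt: "W t = C' * C ^ (d - 1) * inverse t" if "t > 0" for t
  proof -
    have "W t = C' * C ^ (d - 1) * (t ^ (D * (d - 1)) / t ^ ((d - 1) * D + 1))"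
      unfolding W_def \<delta>_def B_def by (simp add: power_mult_distrib power_mult[symmetric] field_simps)
    also have "t ^ (D * (d - 1)) / t ^ ((d - 1) * D + 1) = inverse t"
      using that by (simp add: mult.commute field_simps)
    finally show ?thesis .
  qed
  have W0: "(W \<longlongrightarrow> 0) at_top"
  proof -
    have "((\<lambda>t. C' * C ^ (d - 1) * inverse t) \<longlongrightarrow> C' * C ^ (d - 1) * 0) at_top"
      by (intro tendsto_intros tendsto_inverse_0_at_top filterlim_ident)
    moreover have "eventually (\<lambda>t. C' * C ^ (d - 1) * inverse t = W t) at_top"
      using eventually_gt_at_top[of 0] by eventually_elim (simp add: Wt)
    ultimately show ?thesis by (simp add: Lim_transform_eventually)
  qed
  have evall: "eventually (\<lambda>t. t \<ge> 1 \<and> (\<forall>j. \<bar>x t $ j\<bar> \<le> B t \<and> \<bar>y t $ j\<bar> \<le> B t \<and> \<bar>x t $ j - y t $ j\<bar> \<le> \<delta> t)) at_top"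
    using ev eventually_ge_at_top[of 1] by eventually_elim (auto simp: B_def \<delta>_def)
  have base: "B t \<ge> 1 \<and> \<delta> t \<ge> 0 \<and> W t \<ge> 0 \<and> \<delta> t \<le> W t \<and> \<delta> t * B t ^ (d - 2) \<le> W t \<and> B t * B t ^ (d - 2) = B t ^ (d - 1)"
    if "t \<ge> 1" for t
  proof -
    have B1: "B t \<ge> 1" unfolding B_def using C1 that
      by (metis mult_mono mult_1_right one_le_power zero_le_one order.trans)
    have d0: "\<delta> t \<ge> 0" unfolding \<delta>_def using C'0 that by simp
    have p1: "B t ^ (d - 2) \<le> B t ^ (d - 1)" using B1 by (intro power_increasing) auto
    have p2: "1 \<le> B t ^ (d - 1)" using B1 by simp
    have "B t * B t ^ (d - 2) = B t ^ Suc (d - 2)" by simp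
    also have "Suc (d - 2) = d - 1" using d2 by simp
    finally have p3: "B t * B t ^ (d - 2) = B t ^ (d - 1)" .
    show ?thesis unfolding W_def using B1 d0 p1 p2 p3
      by (auto intro: mult_left_mono[of 1 _ "\<delta> t", simplified] mult_left_mono)
  qed
  have est: "\<bar>(\<Sum>\<alpha>\<in>A. c \<alpha> * monof \<alpha> (\<lambda>i. x t $ i)) - (\<Sum>\<alpha>\<in>A. c \<alpha> * monof \<alpha> (\<lambda>i. y t $ i))\<bar> \<le> S * real d * W t
     \<and> \<bar>pf A c i (x t) - pf A c i (y t)\<bar> \<le> S * real d * real d * W t
     \<and> \<bar>pf A c i (x t)\<bar> \<le> S * real d * B t ^ (d - 1)"
    if "t \<ge> 1" "\<forall>j. \<bar>x t $ j\<bar> \<le> B t \<and> \<bar>y t $ j\<bar> \<le> B t \<and> \<bar>x t $ j - y t $ j\<bar> \<le> \<delta> t" for t i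
  proof -
    note b = base[OF that(1)]
    have e1: "\<bar>(\<Sum>\<alpha>\<in>A. c \<alpha> * monof \<alpha> (\<lambda>i. x t $ i)) - (\<Sum>\<alpha>\<in>A. c \<alpha> * monof \<alpha> (\<lambda>i. y t $ i))\<bar>
           \<le> S * (real d * \<delta> t * B t ^ (d - 1))"
      unfolding S_def by (rule pw_est(1)[OF fin deg d2, where x="\<lambda>i. x t $ i" and y="\<lambda>i. y t $ i"]) (use b that(2) in auto)
    have e2: "\<bar>pf A c i (x t) - pf A c i (y t)\<bar> \<le> S * (real d * (real d * \<delta> t * B t ^ (d - 2)))"
      unfolding S_def pf_def by (rule pw_est(2)[OF fin deg d2, where x="\<lambda>i. x t $ i" and y="\<lambda>i. y t $ i"]) (use b that(2) in auto)
    have e3: "\<bar>pf A c i (x t)\<bar> \<le> S * (real d * B t ^ (d - 1))"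
      unfolding S_def pf_def by (rule pw_est(3)[OF fin deg d2, where x="\<lambda>i. x t $ i" and y="\<lambda>i. y t $ i"]) (use b that(2) in auto)
    have m1: "S * (real d * (real d * \<delta> t * B t ^ (d - 2))) \<le> S * real d * real d * W t"
      using b S0 by (simp add: mult.assoc mult_left_mono)
    have m2: "S * (real d * \<delta> t * B t ^ (d - 1)) = S * real d * W t" by (simp add: W_def)
    have m3: "S * (real d * B t ^ (d - 1)) = S * real d * B t ^ (d - 1)" by simp
    show ?thesis
      using ord_le_eq_trans[OF e1 m2] order_trans[OF e2 m1] ord_le_eq_trans[OF e3 m3] by blast
  qed
  show "((\<lambda>t. (\<Sum>\<alpha>\<in>A. c \<alpha> * monof \<alpha> (\<lambda>i. x t $ i)) - (\<Sum>\<alpha>\<in>A. c \<alpha> * monof \<alpha> (\<lambda>i. y t $ i))) \<longlongrightarrow> 0) at_top"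
  proof (rule Lim_null_comparison)
    show "eventually (\<lambda>t. norm ((\<Sum>\<alpha>\<in>A. c \<alpha> * monof \<alpha> (\<lambda>i. x t $ i)) - (\<Sum>\<alpha>\<in>A. c \<alpha> * monof \<alpha> (\<lambda>i. y t $ i)))
             \<le> S * real d * W t) at_top"
      using evall by eventually_elim (use est in auto)
    show "((\<lambda>t. S * real d * W t) \<longlongrightarrow> 0) at_top"
      using tendsto_mult[OF tendsto_const W0, of "S * real d"] by simp
  qed
  show "((\<lambda>t. pf A c i (x t) - pf A c i (y t)) \<longlongrightarrow> 0) at_top"
  proof (rule Lim_null_comparison)
    show "eventually (\<lambda>t. norm (pf A c i (x t) - pf A c i (y t)) \<le> S * real d * real d * W t) at_top"
      using evall by eventually_elim (use est in auto)
    show "((\<lambda>t. S * real d * real d * W t) \<longlongrightarrow> 0) at_top"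
      using tendsto_mult[OF tendsto_const W0, of "S * real d * real d"] by simp
  qed
  show "((\<lambda>t. y t $ j * pf A c i (y t) - x t $ j * pf A c i (x t)) \<longlongrightarrow> 0) at_top"
  proof (rule Lim_null_comparison)
    show "eventually (\<lambda>t. norm (y t $ j * pf A c i (y t) - x t $ j * pf A c i (x t))
             \<le> S * real d * real d * W t + S * real d * W t) at_top"
      using evall
    proof eventually_elim
      case (elim t)
      note b = base[of t] est[of t i]
      have yj: "\<bar>y t $ j\<bar> \<le> B t" and dj: "\<bar>y t $ j - x t $ j\<bar> \<le> \<delta> t" using elim by (auto simp: abs_minus_commute)
      have e: "y t $ j * pf A c i (y t) - x t $ j * pf A c i (x t)
          = y t $ j * (pf A c i (y t) - pf A c i (x t)) + (y t $ j - x t $ j) * pf A c i (x t)"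
        by (simp add: algebra_simps)
      have "\<bar>y t $ j * pf A c i (y t) - x t $ j * pf A c i (x t)\<bar>
          \<le> \<bar>y t $ j\<bar> * \<bar>pf A c i (y t) - pf A c i (x t)\<bar> + \<bar>y t $ j - x t $ j\<bar> * \<bar>pf A c i (x t)\<bar>"
        unfolding e by (metis abs_mult abs_triangle_ineq)
      also have "\<dots> \<le> B t * (S * (real d * (real d * \<delta> t * B t ^ (d - 2)))) + \<delta> t * (S * (real d * B t ^ (d - 1)))"
      proof (intro add_mono mult_mono)
        show "\<bar>pf A c i (y t) - pf A c i (x t)\<bar> \<le> S * (real d * (real d * \<delta> t * B t ^ (d - 2)))"
          unfolding S_def pf_def
          by (subst abs_minus_commute, rule pw_est(2)[OF fin deg d2, where x="\<lambda>i. x t $ i" and y="\<lambda>i. y t $ i"]) (use b elim in auto)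
        show "\<bar>pf A c i (x t)\<bar> \<le> S * (real d * B t ^ (d - 1))"
          unfolding S_def pf_def by (rule pw_est(3)[OF fin deg d2, where x="\<lambda>i. x t $ i" and y="\<lambda>i. y t $ i"]) (use b elim in auto)
      qed (use yj dj b elim in auto)
      also have "B t * (S * (real d * (real d * \<delta> t * B t ^ (d - 2)))) = S * real d * real d * (\<delta> t * (B t * B t ^ (d - 2)))"
        by (simp add: ac_simps)
      also have "\<dots> = S * real d * real d * W t" using b elim by (simp add: W_def)
      also have "\<delta> t * (S * (real d * B t ^ (d - 1))) = S * real d * W t" by (simp add: W_def ac_simps)
      finally show ?case by simp
    qed
    show "((\<lambda>t. S * real d * real d * W t + S * real d * W t) \<longlongrightarrow> 0) at_top"
      using tendsto_add[OF tendsto_mult[OF tendsto_const W0, of "S * real d * real d"]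
                            tendsto_mult[OF tendsto_const W0, of "S * real d"]] by simp
  qed
  show "((\<lambda>t. norm (x t - y t)) \<longlongrightarrow> 0) at_top"
  proof (rule Lim_null_comparison)
    show "eventually (\<lambda>t. norm (norm (x t - y t)) \<le> real CARD('n) * W t) at_top"
      using evall
    proof eventually_elim
      case (elim t)
      note b = base[OF conjunct1[OF elim]]
      have "norm (x t - y t) \<le> (\<Sum>j\<in>UNIV. \<bar>(x t - y t) $ j\<bar>)" by (rule norm_le_l1_cart)
      also have "\<dots> \<le> (\<Sum>j\<in>(UNIV::'n set). W t)"
      proof (intro sum_mono)
        fix j
        have "\<bar>x t $ j - y t $ j\<bar> \<le> \<delta> t" using elim by auto
        thus "\<bar>(x t - y t) $ j\<bar> \<le> W t" using b by simp
      qed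
      finally show ?case by simp
    qed
    show "((\<lambda>t. real CARD('n) * W t) \<longlongrightarrow> 0) at_top"
      using tendsto_mult[OF tendsto_const W0, of "real CARD('n)"] by simp
  qed
qed



lemma powi_split:
  fixes t :: real assumes "t \<noteq> 0"
  shows "t powi (int D - int k) = t ^ D * inverse t ^ k"
proof -
  have "t powi (int D - int k) = t powi (int D + (- int k))" by simp
  also have "\<dots> = t powi int D * t powi (- int k)" using assms by (rule power_int_add[OF disjI1])
  also have "\<dots> = t ^ D * inverse t ^ k" by (simp add: power_int_minus power_inverse)
  finally show ?thesis .
qed

lemma eval_fps_inv_lim:
  fixes F :: "real fps"
  assumes "fps_conv_radius F > 0"
  shows "((\<lambda>t. eval_fps F (inverse t)) \<longlongrightarrow> eval_fps F 0) at_top"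
proof -
  have "isCont (eval_fps F) 0"
    by (rule continuous_eval_fps) (use assms in \<open>simp add: zero_ereal_def\<close>)
  thus ?thesis by (rule isCont_tendsto_compose[OF _ tendsto_inverse_0_at_top[OF filterlim_ident]])
qed

lemma tendsto_bound_ev:
  fixes g :: "'a \<Rightarrow> real"
  assumes "(g \<longlongrightarrow> l) F"
  shows "eventually (\<lambda>t. \<bar>g t\<bar> \<le> \<bar>l\<bar> + 1) F"
proof -
  have "((\<lambda>t. \<bar>g t\<bar>) \<longlongrightarrow> \<bar>l\<bar>) F" by (rule tendsto_rabs[OF assms])
  from order_tendstoD(2)[OF this, of "\<bar>l\<bar> + 1"] show ?thesis
    by (auto elim: eventually_mono)
qed

lemma scale_aux:
  fixes t :: real assumes "t \<noteq> 0" "m \<le> d"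
  shows "t ^ (d * D) * ((1 / t) ^ (D * (d - m))) = t ^ (D * m)"
proof -
  have "d * D = D * m + D * (d - m)" using assms(2)
    by (metis add_diff_inverse_nat mult.commute distrib_left not_le)
  hence "t ^ (d * D) = t ^ (D * m) * t ^ (D * (d - m))" by (simp add: power_add)
  moreover have "t ^ (D * (d - m)) * (1 / t) ^ (D * (d - m)) = 1"
    using assms(1) by (simp add: power_mult_distrib[symmetric])
  ultimately show ?thesis by (simp add: mult.assoc)
qed



theorem proposition3p2:
  fixes f :: "real^'n \<Rightarrow> real" and d :: nat and t0 R :: real and a :: "real^'n"
    and coef :: "int \<Rightarrow> real^'n" and \<gamma> \<gamma>h :: "real \<Rightarrow> real^'n" and D :: nat
  assumes poly: "poly_fun_of_degree f d"
    and d2: "d \<ge> 2"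
    and D_def: "D = d ^ (CARD('n) - 1)"
    and t0: "t0 \<in> S_infty f"
    and coef_top: "\<And>i. i > int D \<Longrightarrow> coef i = 0"
    and conv: "\<And>t. \<bar>t\<bar> > R \<Longrightarrow>
        summable (\<lambda>k. t powi (int D - int k) *\<^sub>R coef (int D - int k))"
    and gamma_def: "\<And>t. \<bar>t\<bar> > R \<Longrightarrow>
        \<gamma> t = (\<Sum>k. t powi (int D - int k) *\<^sub>R coef (int D - int k))"
    and in_milnor: "\<And>t. \<bar>t\<bar> > R \<Longrightarrow> \<gamma> t \<in> milnor_set f a"
    and branch_at_infinity: "filterlim (\<lambda>t. norm (\<gamma> t)) at_top at_infinity"
    and f_lim: "((\<lambda>t. f (\<gamma> t)) \<longlongrightarrow> t0) at_infinity"
    and gammah_def: "\<And>t. \<gamma>h t = (\<Sum>i\<in>{- (int d - 1) * int D .. int D}. t powi i *\<^sub>R coef i)"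
  shows "(filterlim (\<lambda>t. norm (\<gamma>h t)) at_top at_top \<and> filterlim (\<lambda>t. norm (\<gamma> t)) at_top at_top)
    \<and> (((\<lambda>t. f (\<gamma>h t)) \<longlongrightarrow> t0) at_top \<and> ((\<lambda>t. f (\<gamma> t)) \<longlongrightarrow> t0) at_top)
    \<and> (\<forall>i. ((\<lambda>t. partial f i (\<gamma>h t)) \<longlongrightarrow> 0) at_top \<and> ((\<lambda>t. partial f i (\<gamma> t)) \<longlongrightarrow> 0) at_top)
    \<and> (\<forall>i j. ((\<lambda>t. (\<gamma>h t) $ j * partial f i (\<gamma>h t)) \<longlongrightarrow> 0) at_top
             \<and> ((\<lambda>t. (\<gamma> t) $ j * partial f i (\<gamma> t)) \<longlongrightarrow> 0) at_top)"
proof -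
  obtain c A where fin: "finite A" and fx: "\<And>x. f x = (\<Sum>\<alpha>\<in>A. c \<alpha> * monof \<alpha> (\<lambda>i. x $ i))"
    and deg: "\<And>\<alpha>. \<alpha> \<in> A \<Longrightarrow> (\<Sum>i\<in>UNIV. \<alpha> i) \<le> d"
    using poly_repr[OF poly] by metis
  define Rr where "Rr = max R 0 + 1"
  have Rr: "Rr > R" "Rr \<ge> 1" unfolding Rr_def by auto
  define p where "p j k = coef (int D - int k) $ j" for j k
  define PP where "PP j = Abs_fps (p j)" for j
  define P where "P j = eval_fps (PP j)" for j

  have S1: "summable (\<lambda>k. p j k * inverse t ^ k) \<and> \<gamma> t $ j = t ^ D * (\<Sum>k. p j k * inverse t ^ k)"
    if "\<bar>t\<bar> > R" "t \<noteq> 0" for t j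
  proof -
    define X where "X = (\<lambda>k. t powi (int D - int k) *\<^sub>R coef (int D - int k))"
    have sX: "summable X" using conv[OF that(1)] by (simp add: X_def)
    have Xj: "X k $ j = t ^ D * (p j k * inverse t ^ k)" for k
      by (simp add: X_def p_def powi_split[OF that(2)])
    have s1: "summable (\<lambda>k. X k $ j)" by (rule bounded_linear.summable[OF bounded_linear_vec_nth sX])
    hence s2: "summable (\<lambda>k. p j k * inverse t ^ k)" using that(2) by (simp add: Xj)
    have "\<gamma> t $ j = (\<Sum>k. X k) $ j" using gamma_def[OF that(1)] by (simp add: X_def)
    also have "\<dots> = (\<Sum>k. X k $ j)" by (rule bounded_linear.suminf[OF bounded_linear_vec_nth sX])
    also have "\<dots> = t ^ D * (\<Sum>k. p j k * inverse t ^ k)" unfolding Xj by (rule suminf_mult[OF s2])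
    finally show ?thesis using s2 by simp
  qed
  have rad: "fps_conv_radius (PP j) > 0" for j
  proof -
    have "summable (\<lambda>k. p j k * inverse Rr ^ k)" using S1[of Rr j] Rr by auto
    hence "ereal (norm (inverse Rr)) \<le> conv_radius (p j)" by (rule conv_radius_geI)
    hence le: "ereal (norm (inverse Rr)) \<le> fps_conv_radius (PP j)"
      unfolding fps_conv_radius_def PP_def by simp
    have "0 < ereal (norm (inverse Rr))" using Rr by (simp add: zero_ereal_def)
    thus ?thesis using le by (rule less_le_trans)
  qed
  have Pexp: "P j has_fps_expansion PP j" for j
    unfolding P_def by (rule eval_fps_has_fps_expansion[OF rad])
  have Peval: "P j (inverse t) = (\<Sum>k. p j k * inverse t ^ k)" for j t
    by (simp add: P_def PP_def eval_fps_def)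
  have xP: "\<gamma> t $ j = t ^ D * P j (1 / t)" if "t > Rr" for t j
  proof -
    have "\<gamma> t $ j = t ^ D * P j (inverse t)" using S1[of t j] that Rr by (simp only: Peval)
    thus ?thesis by (simp add: inverse_eq_divide)
  qed
  have evRr: "eventually (\<lambda>t. t > Rr) at_top" by (rule eventually_gt_at_top)

  have "\<forall>j. \<exists>u'. eventually (\<lambda>t. ((\<lambda>t. \<gamma> t $ j) has_real_derivative u' t) (at t)) at_top"
  proof
    fix j
    have "eventually (\<lambda>t. \<gamma> t $ j = t ^ D * P j (1 / t)) at_top"
      using evRr by eventually_elim (rule xP)
    from laurent_asym[OF Pexp this] obtain u' T where dT: "\<forall>t>T. ((\<lambda>t. \<gamma> t $ j) has_real_derivative u' t) (at t)"
      by blast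
    have "eventually (\<lambda>t. ((\<lambda>t. \<gamma> t $ j) has_real_derivative u' t) (at t)) at_top"
      by (rule eventually_mono[OF eventually_gt_at_top[of T]]) (use dT in blast)
    thus "\<exists>u'. eventually (\<lambda>t. ((\<lambda>t. \<gamma> t $ j) has_real_derivative u' t) (at t)) at_top" by blast
  qed
  then obtain xd where "\<forall>j. eventually (\<lambda>t. ((\<lambda>t. \<gamma> t $ j) has_real_derivative xd j t) (at t)) at_top"
    by metis
  hence evxd: "eventually (\<lambda>t. \<forall>j. ((\<lambda>t. \<gamma> t $ j) has_real_derivative xd j t) (at t)) at_top"
    by (intro eventually_all_finite) auto

  define gh where "gh s = (\<Sum>\<alpha>\<in>A. c \<alpha> * (s ^ (D * (d - (\<Sum>i\<in>UNIV. \<alpha> i))) * (\<Prod>i\<in>UNIV. P i s ^ \<alpha> i)))" for s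
  have "hasexp gh" unfolding gh_def
    by (intro hasexp_sum hasexp_mult hasexp_const hasexp_pow hasexp_prod hasexp_power)
       (auto simp: hasexp_def intro: Pexp)
  then obtain H where Hexp: "gh has_fps_expansion H" by (auto simp: hasexp_def)
  have hrep: "f (\<gamma> t) = t ^ (d * D) * gh (1 / t)" if "t > Rr" for t
  proof -
    have t0: "t \<noteq> 0" using that Rr by auto
    have "f (\<gamma> t) = (\<Sum>\<alpha>\<in>A. c \<alpha> * (\<Prod>i\<in>UNIV. (t ^ D * P i (1 / t)) ^ \<alpha> i))"
      by (simp add: fx monof_def xP[OF that])
    also have "\<dots> = (\<Sum>\<alpha>\<in>A. t ^ (d * D) * (c \<alpha> * ((1 / t) ^ (D * (d - (\<Sum>i\<in>UNIV. \<alpha> i))) * (\<Prod>i\<in>UNIV. P i (1 / t) ^ \<alpha> i))))"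
    proof (rule sum.cong[OF refl])
      fix \<alpha> assume "\<alpha> \<in> A"
      have "(\<Prod>i\<in>UNIV. (t ^ D * P i (1 / t)) ^ \<alpha> i) = (\<Prod>i\<in>UNIV. t ^ (D * \<alpha> i)) * (\<Prod>i\<in>UNIV. P i (1 / t) ^ \<alpha> i)"
        by (simp add: power_mult_distrib power_mult prod.distrib)
      also have "(\<Prod>i\<in>UNIV. t ^ (D * \<alpha> i)) = t ^ (D * (\<Sum>i\<in>UNIV. \<alpha> i))"
        by (simp add: power_sum sum_distrib_left)
      also have "\<dots> = t ^ (d * D) * ((1 / t) ^ (D * (d - (\<Sum>i\<in>UNIV. \<alpha> i))))"
        by (rule scale_aux[symmetric, OF t0 deg[OF \<open>\<alpha> \<in> A\<close>]])
      finally show "c \<alpha> * (\<Prod>i\<in>UNIV. (t ^ D * P i (1 / t)) ^ \<alpha> i) =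
          t ^ (d * D) * (c \<alpha> * ((1 / t) ^ (D * (d - (\<Sum>i\<in>UNIV. \<alpha> i))) * (\<Prod>i\<in>UNIV. P i (1 / t) ^ \<alpha> i)))"
        by (simp add: ac_simps)
    qed
    also have "\<dots> = t ^ (d * D) * gh (1 / t)" by (simp add: gh_def sum_distrib_left)
    finally show ?thesis .
  qed
  have ftop: "((\<lambda>t. f (\<gamma> t)) \<longlongrightarrow> t0) at_top"
    by (rule tendsto_mono[OF at_top_le_at_infinity f_lim])
  obtain h' Th where dh: "\<forall>t>Th. ((\<lambda>t. f (\<gamma> t)) has_real_derivative h' t) (at t)"
    and th0: "((\<lambda>t. t * h' t) \<longlongrightarrow> 0) at_top"
  proof -
    have "eventually (\<lambda>t. f (\<gamma> t) = t ^ (d * D) * gh (1 / t)) at_top"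
      using evRr by eventually_elim (rule hrep)
    from laurent_asym[OF Hexp this] ftop show ?thesis using that by blast
  qed

  have rhosum: "rho a x = (\<Sum>i\<in>UNIV. (x $ i - a $ i) ^ 2)" for x :: "real^'n"
    unfolding rho_def power2_norm_eq_inner inner_vec_def by (simp add: power2_eq_square)
  define gr where "gr s = (\<Sum>i\<in>UNIV. (P i s - a $ i * s ^ D) ^ 2)" for s
  have "hasexp gr" unfolding gr_def
    by (intro hasexp_sum hasexp_power hasexp_diff hasexp_mult hasexp_const hasexp_pow)
       (auto simp: hasexp_def intro: Pexp)
  then obtain GR where GRexp: "gr has_fps_expansion GR" by (auto simp: hasexp_def)
  have rrep: "rho a (\<gamma> t) = t ^ (2 * D) * gr (1 / t)" if "t > Rr" for t
  proof -
    have t0: "t \<noteq> 0" using that Rr by auto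
    have e: "(t ^ D * P i (1 / t) - a $ i) ^ 2 = t ^ (2 * D) * (P i (1 / t) - a $ i * (1 / t) ^ D) ^ 2" for i
    proof -
      have "t ^ D * (P i (1 / t) - a $ i * (1 / t) ^ D) = t ^ D * P i (1 / t) - a $ i"
        using t0 by (simp add: algebra_simps power_mult_distrib[symmetric])
      hence "(t ^ D * P i (1 / t) - a $ i) ^ 2 = (t ^ D * (P i (1 / t) - a $ i * (1 / t) ^ D)) ^ 2" by simp
      also have "\<dots> = t ^ (2 * D) * (P i (1 / t) - a $ i * (1 / t) ^ D) ^ 2"
        by (simp add: power_mult_distrib power_mult[symmetric] mult.commute)
      finally show ?thesis .
    qed
    show ?thesis unfolding rhosum gr_def by (simp add: xP[OF that] e sum_distrib_left)
  qed
  have nga: "filterlim (\<lambda>t. norm (\<gamma> t - a)) at_top at_top"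
  proof -
    have n1: "filterlim (\<lambda>t. norm (\<gamma> t)) at_top at_top"
      by (rule filterlim_mono[OF branch_at_infinity order_refl at_top_le_at_infinity])
    have "filterlim (\<lambda>t. - norm a + norm (\<gamma> t)) at_top at_top"
      by (rule filterlim_tendsto_add_at_top[OF tendsto_const n1])
    moreover have "eventually (\<lambda>t. - norm a + norm (\<gamma> t) \<le> norm (\<gamma> t - a)) at_top"
      by (intro always_eventually allI) (use norm_triangle_ineq2 in \<open>smt (verit)\<close>)
    ultimately show ?thesis by (rule filterlim_at_top_mono)
  qed
  have rinf: "filterlim (\<lambda>t. rho a (\<gamma> t)) at_top at_top"
    unfolding rho_def by (rule filterlim_pow_at_top[OF _ nga]) simp
  obtain r' Tr cc where dr: "\<forall>t>Tr. ((\<lambda>t. rho a (\<gamma> t)) has_real_derivative r' t) (at t)"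
    and cc: "cc > 0" and evr: "eventually (\<lambda>t. cc * rho a (\<gamma> t) \<le> t * r' t) at_top"
  proof -
    have "eventually (\<lambda>t. rho a (\<gamma> t) = t ^ (2 * D) * gr (1 / t)) at_top"
      using evRr by eventually_elim (rule rrep)
    from laurent_asym[OF GRexp this] rinf show ?thesis using that by blast
  qed

  have evbig: "eventually (\<lambda>t. 1 \<le> norm (\<gamma> t - a)) at_top"
    using nga by (simp add: filterlim_at_top)
  have key: "eventually (\<lambda>t. \<bar>pf A c i (\<gamma> t)\<bar> \<le> 2 * \<bar>t * h' t\<bar> / cc \<and>
      \<bar>\<gamma> t $ j * pf A c i (\<gamma> t)\<bar> \<le> (1 + norm a) * (2 * \<bar>t * h' t\<bar> / cc)) at_top" for i j
    using evxd evbig evr eventually_gt_at_top[of "max Rr (max Th (max Tr 1))"]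
  proof eventually_elim
    case (elim t)
    define x where "x = \<gamma> t"
    have tR: "\<bar>t\<bar> > R" "t > Th" "t > Tr" "t > 0" using elim Rr by auto
    have xa: "x \<noteq> a" using elim(2) by (auto simp: x_def)
    obtain \<mu> where mu: "\<And>v. (\<Sum>i\<in>UNIV. v $ i * pf A c i x) = \<mu> * (2 * ((x - a) \<bullet> v))"
      using milnor_dep[OF fx in_milnor[OF tR(1)] xa[unfolded x_def]] unfolding x_def by blast
    have D1: "((\<lambda>t. f (\<gamma> t)) has_real_derivative (\<Sum>i\<in>UNIV. xd i t * pf A c i (\<gamma> t))) (at t)"
      by (rule f_deriv_comp[OF fx]) (use elim in auto)
    have hh: "h' t = (\<Sum>i\<in>UNIV. xd i t * pf A c i x)"
      using DERIV_unique[OF D1 dh[rule_format, OF tR(2)]] by (simp add: x_def)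
    have D2: "((\<lambda>t. rho a (\<gamma> t)) has_real_derivative (\<Sum>i\<in>UNIV. 2 * (\<gamma> t $ i - a $ i) * xd i t)) (at t)"
    proof -
      have "((\<lambda>t. \<Sum>i\<in>UNIV. (\<gamma> t $ i - a $ i) ^ 2) has_real_derivative
              (\<Sum>i\<in>UNIV. 2 * (\<gamma> t $ i - a $ i) * xd i t)) (at t)"
      proof (rule DERIV_sum)
        fix i
        have di: "((\<lambda>t. \<gamma> t $ i - a $ i) has_real_derivative xd i t - 0) (at t)"
          by (rule DERIV_diff) (use elim in auto)
        have "((\<lambda>t. (\<gamma> t $ i - a $ i) ^ 2) has_real_derivative
                 of_nat 2 * ((xd i t - 0) * (\<gamma> t $ i - a $ i) ^ (2 - Suc 0))) (at t)"
          by (rule DERIV_power[OF di])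
        thus "((\<lambda>t. (\<gamma> t $ i - a $ i) ^ 2) has_real_derivative 2 * (\<gamma> t $ i - a $ i) * xd i t) (at t)"
          by (rule DERIV_cong) (simp add: algebra_simps)
      qed
      thus ?thesis by (simp add: rhosum)
    qed
    have rr: "r' t = (\<Sum>i\<in>UNIV. 2 * (x $ i - a $ i) * xd i t)"
      using DERIV_unique[OF D2 dr[rule_format, OF tR(3)]] by (simp add: x_def)
    have hmu: "h' t = \<mu> * r' t"
    proof -
      have "h' t = \<mu> * (2 * ((x - a) \<bullet> (\<chi> i. xd i t)))" using mu[of "\<chi> i. xd i t"] hh by simp
      also have "2 * ((x - a) \<bullet> (\<chi> i. xd i t)) = r' t"
        unfolding rr inner_vec_def sum_distrib_left by (intro sum.cong) (simp_all add: algebra_simps)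
      finally show ?thesis .
    qed
    have pfmu: "pf A c k x = \<mu> * (2 * (x $ k - a $ k))" for k
    proof -
      have "(\<Sum>i\<in>UNIV. axis k 1 $ i * pf A c i x) = pf A c k x"
      proof -
        have "(\<Sum>i\<in>UNIV. axis k (1::real) $ i * pf A c i x) = (\<Sum>i\<in>UNIV. if i = k then pf A c i x else 0)"
          by (rule sum.cong) (auto simp: axis_def)
        thus ?thesis by simp
      qed
      moreover have "(x - a) \<bullet> axis k 1 = x $ k - a $ k" by (simp add: inner_axis)
      ultimately show ?thesis using mu[of "axis k 1"] by simp
    qed
    define \<rho> where "\<rho> = rho a x"
    have rho_eq: "\<rho> = norm (x - a) ^ 2" by (simp add: \<rho>_def rho_def)
    have n1: "norm (x - a) \<ge> 1" using elim(2) by (simp add: x_def)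
    have rpos: "\<rho> \<ge> 1" using n1 rho_eq by (metis one_le_power)
    have cr: "cc * \<rho> \<le> t * r' t" using elim(3) by (simp add: \<rho>_def x_def)
    have r'pos: "r' t > 0"
    proof -
      have "0 < cc * \<rho>" using cc rpos by simp
      hence "0 < t * r' t" using cr by linarith
      thus ?thesis using tR(4) by (simp add: zero_less_mult_iff)
    qed
    have mr: "\<bar>\<mu>\<bar> * \<rho> \<le> \<bar>t * h' t\<bar> / cc"
    proof -
      have "\<bar>\<mu>\<bar> * (cc * \<rho>) \<le> \<bar>\<mu>\<bar> * (t * r' t)" using cr by (intro mult_left_mono) auto
      also have "\<dots> = \<bar>t * h' t\<bar>" using tR(4) r'pos by (simp add: hmu abs_mult)
      finally have "cc * (\<bar>\<mu>\<bar> * \<rho>) \<le> \<bar>t * h' t\<bar>" by (simp add: ac_simps)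
      thus ?thesis using cc by (simp add: field_simps)
    qed
    have pfb: "\<bar>pf A c i x\<bar> \<le> 2 * \<bar>\<mu>\<bar> * norm (x - a)"
    proof -
      have ci: "\<bar>x $ i - a $ i\<bar> \<le> norm (x - a)" using component_le_norm_cart[of "x - a" i] by simp
      have "\<bar>pf A c i x\<bar> = \<bar>\<mu>\<bar> * (2 * \<bar>x $ i - a $ i\<bar>)" by (simp only: pfmu abs_mult abs_numeral)
      also have "\<dots> \<le> \<bar>\<mu>\<bar> * (2 * norm (x - a))"
        by (intro mult_left_mono) (use ci in auto)
      finally show ?thesis by simp
    qed
    have na: "norm (x - a) \<le> \<rho>"
      using n1 rho_eq mult_left_mono[of 1 "norm (x - a)" "norm (x - a)"] by (simp add: power2_eq_square)
    have b1: "\<bar>pf A c i x\<bar> \<le> 2 * (\<bar>\<mu>\<bar> * \<rho>)"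
    proof -
      have "2 * \<bar>\<mu>\<bar> * norm (x - a) \<le> 2 * \<bar>\<mu>\<bar> * \<rho>" by (intro mult_left_mono na) auto
      thus ?thesis using pfb by simp
    qed
    have b2: "\<bar>x $ j * pf A c i x\<bar> \<le> (1 + norm a) * (2 * (\<bar>\<mu>\<bar> * \<rho>))"
    proof -
      have "\<bar>x $ j\<bar> \<le> norm x" by (rule component_le_norm_cart)
      also have "norm x \<le> norm (x - a) + norm a" by (metis norm_triangle_sub add.commute)
      finally have xj: "\<bar>x $ j\<bar> \<le> norm (x - a) + norm a" .
      have "\<bar>x $ j * pf A c i x\<bar> \<le> (norm (x - a) + norm a) * (2 * \<bar>\<mu>\<bar> * norm (x - a))"
        unfolding abs_mult by (intro mult_mono xj pfb) auto
      also have "\<dots> = 2 * \<bar>\<mu>\<bar> * (norm (x - a) * norm (x - a)) + norm a * (2 * \<bar>\<mu>\<bar> * norm (x - a))"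
        by (simp add: algebra_simps)
      also have "\<dots> \<le> 2 * \<bar>\<mu>\<bar> * \<rho> + norm a * (2 * \<bar>\<mu>\<bar> * \<rho>)"
        using na rho_eq by (intro add_mono mult_left_mono) (auto simp: power2_eq_square)
      finally show ?thesis by (simp add: algebra_simps)
    qed
    have m2: "2 * (\<bar>\<mu>\<bar> * \<rho>) \<le> 2 * \<bar>t * h' t\<bar> / cc" using mr by simp
    show ?case
    proof
      show "\<bar>pf A c i (\<gamma> t)\<bar> \<le> 2 * \<bar>t * h' t\<bar> / cc" using b1 m2 by (simp add: x_def)
      have "(1 + norm a) * (2 * (\<bar>\<mu>\<bar> * \<rho>)) \<le> (1 + norm a) * (2 * \<bar>t * h' t\<bar> / cc)"
        using m2 by (intro mult_left_mono) auto
      thus "\<bar>\<gamma> t $ j * pf A c i (\<gamma> t)\<bar> \<le> (1 + norm a) * (2 * \<bar>t * h' t\<bar> / cc)"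
        using b2 by (simp add: x_def)
    qed
  qed
  have W0: "((\<lambda>t. 2 * \<bar>t * h' t\<bar> / cc) \<longlongrightarrow> 0) at_top"
  proof -
    have "((\<lambda>t. 2 / cc * \<bar>t * h' t\<bar>) \<longlongrightarrow> 2 / cc * 0) at_top"
      by (intro tendsto_mult tendsto_const tendsto_rabs_zero th0)
    moreover have "(\<lambda>t. 2 / cc * \<bar>t * h' t\<bar>) = (\<lambda>t. 2 * \<bar>t * h' t\<bar> / cc)" by auto
    ultimately show ?thesis by simp
  qed
  have pg: "((\<lambda>t. pf A c i (\<gamma> t)) \<longlongrightarrow> 0) at_top" for i
    by (rule Lim_null_comparison[OF eventually_mono[OF key[of i i]] W0]) auto
  have xpg: "((\<lambda>t. \<gamma> t $ j * pf A c i (\<gamma> t)) \<longlongrightarrow> 0) at_top" for i j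
  proof (rule Lim_null_comparison)
    show "((\<lambda>t. (1 + norm a) * (2 * \<bar>t * h' t\<bar> / cc)) \<longlongrightarrow> 0) at_top"
      using tendsto_mult[OF tendsto_const W0, of "1 + norm a"] by simp
    show "eventually (\<lambda>t. norm (\<gamma> t $ j * pf A c i (\<gamma> t)) \<le> (1 + norm a) * (2 * \<bar>t * h' t\<bar> / cc)) at_top"
      by (rule eventually_mono[OF key[of i j]]) auto
  qed

  define M where "M = d * D + 1"
  define K where "K = (d - 1) * D + 1"
  have KM: "K + D = M" unfolding K_def M_def using d2 by (cases d) (auto simp: algebra_simps)
  define E where "E j = eval_fps (fps_shift M (PP j))" for j
  have radE: "fps_conv_radius (fps_shift M (PP j)) > 0" for j using rad[of j] by simp
  have yh: "\<gamma>h t $ j = t ^ D * (\<Sum>k\<in>{..<M}. p j k * inverse t ^ k)" if "t \<noteq> 0" for t j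
  proof -
    have neg: "- (int d - 1) * int D = int D - int d * int D" by (simp add: algebra_simps)
    have "\<gamma>h t $ j = (\<Sum>i\<in>{- (int d - 1) * int D .. int D}. t powi i * coef i $ j)"
      by (simp add: gammah_def)
    also have "\<dots> = (\<Sum>k\<in>{..<M}. t powi (int D - int k) * coef (int D - int k) $ j)"
    proof (rule sum.reindex_bij_witness[of _ "\<lambda>k. int D - int k" "\<lambda>i. nat (int D - i)"])
      fix i assume "i \<in> {- (int d - 1) * int D .. int D}"
      hence i: "int D - int d * int D \<le> i" "i \<le> int D" using neg by auto
      show "int D - int (nat (int D - i)) = i" using i by simp
      have "int D - i \<le> int d * int D" using i by simp
      hence "nat (int D - i) \<le> d * D" by (simp add: nat_le_iff)
      thus "nat (int D - i) \<in> {..<M}" by (simp add: M_def)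
      show "t powi (int D - int (nat (int D - i))) * coef (int D - int (nat (int D - i))) $ j = t powi i * coef i $ j"
        using i by simp
    next
      fix k assume "k \<in> {..<M}"
      hence k: "k \<le> d * D" by (simp add: M_def)
      show "nat (int D - (int D - int k)) = k" by simp
      have "int k \<le> int d * int D" using k by (metis of_nat_le_iff of_nat_mult)
      thus "int D - int k \<in> {- (int d - 1) * int D .. int D}" using neg by simp
    qed
    also have "\<dots> = t ^ D * (\<Sum>k\<in>{..<M}. p j k * inverse t ^ k)"
      by (simp add: powi_split[OF that] p_def sum_distrib_left ac_simps)
    finally show ?thesis .
  qed
  have Eeval: "E j s = (\<Sum>n. p j (n + M) * s ^ n)" for j s
    by (simp add: E_def eval_fps_def PP_def)
  have xy: "\<gamma> t $ j - \<gamma>h t $ j = E j (inverse t) / t ^ K" if "t > Rr" for t j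
  proof -
    define s where "s = inverse t"
    have t0: "t \<noteq> 0" "s \<noteq> 0" using that Rr by (auto simp: s_def)
    have S: "summable (\<lambda>k. p j k * s ^ k)" and g: "\<gamma> t $ j = t ^ D * (\<Sum>k. p j k * s ^ k)"
      using S1[of t j] that Rr by (auto simp: s_def)
    have sh: "summable (\<lambda>n. p j (n + M) * s ^ (n + M))" using S by (subst summable_iff_shift) 
    have e1: "(\<lambda>n. p j (n + M) * s ^ (n + M)) = (\<lambda>n. s ^ M * (p j (n + M) * s ^ n))"
      by (auto simp: power_add ac_simps)
    have sh2: "summable (\<lambda>n. p j (n + M) * s ^ n)" using sh t0 unfolding e1 by simp
    have "(\<Sum>k. p j k * s ^ k) = (\<Sum>n. p j (n + M) * s ^ (n + M)) + (\<Sum>k\<in>{..<M}. p j k * s ^ k)"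
      by (rule suminf_split_initial_segment[OF S])
    also have "(\<Sum>n. p j (n + M) * s ^ (n + M)) = s ^ M * E j s"
      unfolding e1 Eeval by (rule suminf_mult[OF sh2])
    finally have "\<gamma> t $ j - \<gamma>h t $ j = t ^ D * (s ^ M * E j s)"
      using g yh[OF t0(1), of j] by (simp add: s_def algebra_simps)
    also have "t ^ D * s ^ M = s ^ K"
    proof -
      have "s ^ M = s ^ K * s ^ D" using KM by (metis power_add)
      moreover have "t ^ D * s ^ D = 1" using t0 by (simp add: s_def power_mult_distrib[symmetric])
      ultimately show ?thesis by (simp add: ac_simps)
    qed
    hence "t ^ D * (s ^ M * E j s) = s ^ K * E j s" by (metis mult.assoc)
    finally show ?thesis by (simp add: s_def power_inverse field_simps)
  qed
  define C0 where "C0 = (\<Sum>j\<in>UNIV. \<bar>P j 0\<bar> + 1)"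
  define C' where "C' = (\<Sum>j\<in>UNIV. \<bar>E j 0\<bar> + 1)"
  define C where "C = 1 + C0 + C'"
  have C0p: "\<bar>P j 0\<bar> + 1 \<le> C0" for j unfolding C0_def
    by (rule member_le_sum[of j UNIV "\<lambda>j. \<bar>P j 0\<bar> + 1"]) auto
  have C'p: "\<bar>E j 0\<bar> + 1 \<le> C'" for j unfolding C'_def
    by (rule member_le_sum[of j UNIV "\<lambda>j. \<bar>E j 0\<bar> + 1"]) auto
  have C00: "C0 \<ge> 0" "C' \<ge> 0" unfolding C0_def C'_def by (auto intro: sum_nonneg)
  have C1: "C \<ge> 1" using C00 by (simp add: C_def)
  have evPE: "eventually (\<lambda>t. \<forall>j. \<bar>P j (inverse t)\<bar> \<le> \<bar>P j 0\<bar> + 1 \<and> \<bar>E j (inverse t)\<bar> \<le> \<bar>E j 0\<bar> + 1) at_top"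
  proof (rule eventually_all_finite)
    fix j
    have "eventually (\<lambda>t. \<bar>P j (inverse t)\<bar> \<le> \<bar>P j 0\<bar> + 1) at_top"
      unfolding P_def by (rule tendsto_bound_ev[OF eval_fps_inv_lim[OF rad]])
    moreover have "eventually (\<lambda>t. \<bar>E j (inverse t)\<bar> \<le> \<bar>E j 0\<bar> + 1) at_top"
      unfolding E_def by (rule tendsto_bound_ev[OF eval_fps_inv_lim[OF radE]])
    ultimately show "eventually (\<lambda>t. \<bar>P j (inverse t)\<bar> \<le> \<bar>P j 0\<bar> + 1 \<and> \<bar>E j (inverse t)\<bar> \<le> \<bar>E j 0\<bar> + 1) at_top"
      by (rule eventually_conj)
  qed
  have evxy: "eventually (\<lambda>t. \<forall>j. \<bar>\<gamma> t $ j\<bar> \<le> C * t ^ D \<and> \<bar>\<gamma>h t $ j\<bar> \<le> C * t ^ D \<and>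
                 \<bar>\<gamma> t $ j - \<gamma>h t $ j\<bar> \<le> C' / t ^ ((d - 1) * D + 1)) at_top"
    using evPE evRr
  proof eventually_elim
    case (elim t)
    have t1: "t \<ge> 1" using elim Rr by simp
    show ?case
    proof
      fix j
      have tD: "t ^ D \<ge> 1" "t ^ K \<ge> 1" using t1 by auto
      have xa: "\<bar>\<gamma> t $ j\<bar> \<le> C0 * t ^ D"
      proof -
        have "\<bar>\<gamma> t $ j\<bar> = t ^ D * \<bar>P j (inverse t)\<bar>"
          using xP[OF elim(2), of j] t1 by (simp add: abs_mult inverse_eq_divide)
        also have "\<dots> \<le> t ^ D * C0"
          using elim(1) C0p[of j] t1 by (intro mult_left_mono) (auto intro: order_trans)
        finally show ?thesis by (simp add: ac_simps)
      qed
      have d: "\<bar>\<gamma> t $ j - \<gamma>h t $ j\<bar> \<le> C' / t ^ K"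
      proof -
        have "\<bar>\<gamma> t $ j - \<gamma>h t $ j\<bar> = \<bar>E j (inverse t)\<bar> / t ^ K"
          using xy[OF elim(2), of j] t1 by simp
        also have "\<dots> \<le> C' / t ^ K"
          using elim(1) C'p[of j] t1 by (intro divide_right_mono) (auto intro: order_trans)
        finally show ?thesis .
      qed
      have "C' / t ^ K \<le> C'" using tD C00 by (simp add: divide_le_eq mult_le_cancel_left1)
      also have "C' \<le> C' * t ^ D" using tD C00 by (simp add: mult_le_cancel_left1)
      finally have d2': "C' / t ^ K \<le> C' * t ^ D" .
      have "\<bar>\<gamma>h t $ j\<bar> \<le> \<bar>\<gamma> t $ j\<bar> + \<bar>\<gamma> t $ j - \<gamma>h t $ j\<bar>" by linarith
      also have "\<dots> \<le> C0 * t ^ D + C' * t ^ D" using xa d d2' by linarith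
      also have "\<dots> \<le> C * t ^ D" using tD by (simp add: C_def algebra_simps)
      finally have ya: "\<bar>\<gamma>h t $ j\<bar> \<le> C * t ^ D" .
      have "C0 * t ^ D \<le> C * t ^ D" using tD C00 by (intro mult_right_mono) (auto simp: C_def)
      thus "\<bar>\<gamma> t $ j\<bar> \<le> C * t ^ D \<and> \<bar>\<gamma>h t $ j\<bar> \<le> C * t ^ D \<and>
                 \<bar>\<gamma> t $ j - \<gamma>h t $ j\<bar> \<le> C' / t ^ ((d - 1) * D + 1)"
        using xa ya d by (simp add: K_def)
    qed
  qed
  note T = trunc_lim[OF fin deg d2 C1 C00(2) evxy]

  have n1: "filterlim (\<lambda>t. norm (\<gamma> t)) at_top at_top"
    by (rule filterlim_mono[OF branch_at_infinity order_refl at_top_le_at_infinity])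
  have nh: "filterlim (\<lambda>t. norm (\<gamma>h t)) at_top at_top"
  proof -
    have "filterlim (\<lambda>t. - norm (\<gamma> t - \<gamma>h t) + norm (\<gamma> t)) at_top at_top"
      by (rule filterlim_tendsto_add_at_top[OF _ n1]) (use tendsto_minus[OF T(4)] in simp)
    moreover have "eventually (\<lambda>t. - norm (\<gamma> t - \<gamma>h t) + norm (\<gamma> t) \<le> norm (\<gamma>h t)) at_top"
      by (intro always_eventually allI) (use norm_triangle_ineq2 in \<open>smt (verit)\<close>)
    ultimately show ?thesis by (rule filterlim_at_top_mono)
  qed
  have fh: "((\<lambda>t. f (\<gamma>h t)) \<longlongrightarrow> t0) at_top"
  proof -
    have "((\<lambda>t. f (\<gamma> t) - ((\<Sum>\<alpha>\<in>A. c \<alpha> * monof \<alpha> (\<lambda>i. \<gamma> t $ i)) - (\<Sum>\<alpha>\<in>A. c \<alpha> * monof \<alpha> (\<lambda>i. \<gamma>h t $ i))))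
        \<longlongrightarrow> t0 - 0) at_top"
      by (rule tendsto_diff[OF ftop T(1)])
    thus ?thesis by (simp add: fx)
  qed
  have ph: "((\<lambda>t. pf A c i (\<gamma>h t)) \<longlongrightarrow> 0) at_top" for i
  proof -
    have "((\<lambda>t. pf A c i (\<gamma> t) - (pf A c i (\<gamma> t) - pf A c i (\<gamma>h t))) \<longlongrightarrow> 0 - 0) at_top"
      by (rule tendsto_diff[OF pg T(2)])
    thus ?thesis by simp
  qed
  have xph: "((\<lambda>t. \<gamma>h t $ j * pf A c i (\<gamma>h t)) \<longlongrightarrow> 0) at_top" for i j
  proof -
    have "((\<lambda>t. \<gamma> t $ j * pf A c i (\<gamma> t) + (\<gamma>h t $ j * pf A c i (\<gamma>h t) - \<gamma> t $ j * pf A c i (\<gamma> t))) \<longlongrightarrow> 0 + 0) at_top"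
      by (rule tendsto_add[OF xpg T(3)])
    thus ?thesis by simp
  qed
  show ?thesis
    unfolding partial_eq[OF fx, abs_def]
    using nh n1 fh ftop ph pg xph xpg by blast
qed


end
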